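(* Let $\varphi=\nu\tilde n.\sigma$ be a frame that is well-formed with respect to a name $\mathtt{s}$, where $\mathtt{s}\in\tilde n$ is a restricted name of $\varphi$. Then $\varphi\nvdash \mathtt{s}$ if and only if $\varphi[\mathtt{s}/M]\approx \varphi[\mathtt{s}/M']$ for all closed terms $M,M'$ that are public with respect to $\varphi$.
   Context: Terms are built over the signature $\Sigma$ consisting of $\mathsf{enc}$ (arity 3), $\mathsf{dec}$ (2), $\mathsf{enca}$ (3), $\mathsf{deca}$ (2), $\mathsf{pub}$ (1), $\mathsf{priv}$ (1), pairing $\langle\cdot,\cdot\rangle$ (2), $\pi_1,\pi_2$ (1), $\mathsf{sign}$ (2), $\mathsf{check}$ (3), $\mathsf{retrieve}$ (1), together with a set of constants (including $\mathsf{ok}$), an infinite set $\mathcal N$ of names and an infinite set $\mathcal X$ of variables. Constructors are $\langle\rangle,\mathsf{enc},\mathsf{enca},\mathsf{sign}$; destructors are $\pi_1,\pi_2,\mathsf{dec},\mathsf{deca},\mathsf{check},\mathsf{retrieve}$. $\mathrm{fn}(T)$ is the set of names of $T$; a term is closed (ground) if it has no variables. Positions are finite sequences of positive integers ($\epsilon$ the root), $T|_p$ is the subterm at $p$. The equational theory $E$ is generated by $\pi_1(\langle z_1,z_2\rangle)=z_1$, $\pi_2(\langle z_1,z_2\rangle)=z_2$, $\mathsf{dec}(\mathsf{enc}(z_1,z_2,z_3),z_2)=z_1$, $\mathsf{deca}(\mathsf{enca}(z_1,\mathsf{pub}(z_2),z_3),\mathsf{priv}(z_2))=z_1$, $\mathsf{check}(z_1,\mathsf{sign}(z_1,\mathsf{priv}(z_2)),\mathsf{pub}(z_2))=\mathsf{ok}$,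 $\mathsf{retrieve}(\mathsf{sign}(z_1,z_2))=z_1$; $=_E$ is the induced equality. A frame $\varphi=\nu\tilde n.\sigma$ consists of a finite set $\tilde n$ of (restricted) names and an acyclic substitution $\sigma=\{y_1\mapsto M_1,\dots,y_l\mapsto M_l\}$; $\mathrm{dom}(\varphi)=\{y_1,\dots,y_l\}$, $\mathrm{ran}(\sigma)=\{M_1,\dots,M_l\}$. A term is public w.r.t. $\varphi$ (or w.r.t. $\tilde n$) if it contains no name of $\tilde n$ and no symbol $\mathsf{priv}$. Deducibility $\varphi\vdash M$ is the smallest relation such that $\varphi\vdash x\sigma$ for $x\in\mathrm{dom}(\sigma)$, $\varphi\vdash m$ for every name $m\notin\tilde n$, if $\varphi\vdash T_1,\dots,\varphi\vdash T_k$ then $\varphi\vdash f(T_1,\dots,T_k)$ for every $f\neq\mathsf{priv}$ of arity $k$, and if $\varphi\vdash T$ and $T=_E T'$ then $\varphi\vdash T'$. For $\mathtt{s}\in\tilde n$ and $M$ with $\mathrm{fn}(M)\cap\tilde n=\emptyset$, $\varphi[\mathtt{s}/M]=\nu\tilde n.\sigma[\mathtt{s}/M]$ replaces every occurrence of $\mathtt{s}$ in the terms of $\sigma$ by $M$. A frame $\nu\tilde n.\sigma$ passes the test $(U,V)$ if, after renaming the names of $\tilde n$ so that none occurs in $U$ or $V$, $U\sigma=_E V\sigma$. Two frames $\varphi,\varphi'$ are statically equivalent, $\varphi\approx\varphi'$, if $\mathrm{dom}(\varphi)=\mathrm{dom}(\varphi')$ and for all terms $U,V$ public w.r.t. both frames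 with variables in $\mathrm{dom}(\varphi)$, $\varphi$ passes $(U,V)$ iff $\varphi'$ passes $(U,V)$. An encryption (occurrence) in a term $U$ is a position $q$ with head symbol of $U|_q$ in $\{\mathsf{enc},\mathsf{enca}\}$. It is an agent encryption w.r.t. a set of names $\tilde m$ if $U|_{q\cdot 3}\in\tilde m$. It is a probabilistic encryption w.r.t. a set of terms $S$ if for every $V\in S$ and position $p$ with $V|_p=U|_{q\cdot 3}$ we have $p=q'\cdot 3$ for some $q'$ with $V|_{q'}=U|_q$. A frame $\varphi=\nu\tilde n.\sigma$ is well-formed w.r.t. a name $\mathtt{s}$ if: (1) every encryption occurring in the terms of $\sigma$ is an agent encryption w.r.t. $\tilde n\setminus\{\mathtt{s}\}$ and a probabilistic encryption w.r.t. $\mathrm{ran}(\sigma)$; (2) for all subterms $\mathsf{enc}(M,K,R)$, $\mathsf{enca}(M',K',R')$, $\mathsf{sign}(U,V)$, $\mathsf{pub}(W)$, $\mathsf{priv}(W')$ of terms of $\varphi$, $\mathtt{s}\notin\mathrm{fn}(K,K',V,W,W',R,R')$; (3) $\varphi$ contains no destructor symbol. *)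

theory Defs
  imports Main
begin

datatype msg =
    Nm nat | Vr nat | Cst string
  | Enc msg msg msg | Dec msg msg
  | Enca msg msg msg | Deca msg msg
  | Pub msg | Priv msg
  | Pair msg msg | Pi1 msg | Pi2 msg
  | Sign msg msg | Check msg msg msg | Retrieve msg

datatype sym =
    SNm nat | SVr nat | SCst string
  | SEnc | SDec | SEnca | SDeca | SPub | SPriv
  | SPair | SPi1 | SPi2 | SSign | SCheck | SRetrieve

primrec head :: "msg \<Rightarrow> sym" where
  "head (Nm n) = SNm n" | "head (Vr x) = SVr x" | "head (Cst c) = SCst c"
| "head (Enc a b c) = SEnc" | "head (Dec a b) = SDec"
| "head (Enca a b c) = SEnca" | "head (Deca a b) = SDeca"
| "head (Pub a) = SPub" | "head (Priv a) = SPriv"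
| "head (Pair a b) = SPair" | "head (Pi1 a) = SPi1" | "head (Pi2 a) = SPi2"
| "head (Sign a b) = SSign" | "head (Check a b c) = SCheck" | "head (Retrieve a) = SRetrieve"

primrec args :: "msg \<Rightarrow> msg list" where
  "args (Nm n) = []" | "args (Vr x) = []" | "args (Cst c) = []"
| "args (Enc a b c) = [a, b, c]" | "args (Dec a b) = [a, b]"
| "args (Enca a b c) = [a, b, c]" | "args (Deca a b) = [a, b]"
| "args (Pub a) = [a]" | "args (Priv a) = [a]"
| "args (Pair a b) = [a, b]" | "args (Pi1 a) = [a]" | "args (Pi2 a) = [a]"
| "args (Sign a b) = [a, b]" | "args (Check a b c) = [a, b, c]" | "args (Retrieve a) = [a]"

definition is_fun :: "msg \<Rightarrow> bool" where
  "is_fun t \<longleftrightarrow> (\<forall>n. t \<noteq> Nm n) \<and> (\<forall>x. t \<noteq> Vr x)"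

text \<open>Positions are lists of positive integers; the root is []; T|_p is subt T p.\<close>
fun subt :: "msg \<Rightarrow> nat list \<Rightarrow> msg option" where
  "subt t [] = Some t"
| "subt t (i # p) = (if 0 < i \<and> i \<le> length (args t) then subt (args t ! (i - 1)) p else None)"

definition subterms :: "msg \<Rightarrow> msg set" where
  "subterms t = {u. \<exists>p. subt t p = Some u}"

definition fn :: "msg \<Rightarrow> nat set" where
  "fn t = {n. Nm n \<in> subterms t}"

definition vars :: "msg \<Rightarrow> nat set" where
  "vars t = {x. Vr x \<in> subterms t}"

definition closed :: "msg \<Rightarrow> bool" where
  "closed t \<longleftrightarrow> vars t = {}"

primrec lmap :: "(msg \<Rightarrow> msg) \<Rightarrow> msg \<Rightarrow> msg" where
  "lmap f (Nm n) = f (Nm n)" | "lmap f (Vr x) = f (Vr x)" | "lmap f (Cst c) = Cst c"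
| "lmap f (Enc a b c) = Enc (lmap f a) (lmap f b) (lmap f c)"
| "lmap f (Dec a b) = Dec (lmap f a) (lmap f b)"
| "lmap f (Enca a b c) = Enca (lmap f a) (lmap f b) (lmap f c)"
| "lmap f (Deca a b) = Deca (lmap f a) (lmap f b)"
| "lmap f (Pub a) = Pub (lmap f a)" | "lmap f (Priv a) = Priv (lmap f a)"
| "lmap f (Pair a b) = Pair (lmap f a) (lmap f b)"
| "lmap f (Pi1 a) = Pi1 (lmap f a)" | "lmap f (Pi2 a) = Pi2 (lmap f a)"
| "lmap f (Sign a b) = Sign (lmap f a) (lmap f b)"
| "lmap f (Check a b c) = Check (lmap f a) (lmap f b) (lmap f c)"
| "lmap f (Retrieve a) = Retrieve (lmap f a)"

inductive eqE :: "msg \<Rightarrow> msg \<Rightarrow> bool" where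
  ax_pi1: "eqE (Pi1 (Pair z1 z2)) z1"
| ax_pi2: "eqE (Pi2 (Pair z1 z2)) z2"
| ax_dec: "eqE (Dec (Enc z1 z2 z3) z2) z1"
| ax_deca: "eqE (Deca (Enca z1 (Pub z2) z3) (Priv z2)) z1"
| ax_check: "eqE (Check z1 (Sign z1 (Priv z2)) (Pub z2)) (Cst ''ok'')"
| ax_retrieve: "eqE (Retrieve (Sign z1 z2)) z1"
| refl: "eqE t t"
| sym: "eqE s t \<Longrightarrow> eqE t s"
| trans: "eqE s t \<Longrightarrow> eqE t u \<Longrightarrow> eqE s u"
| cong: "head s = head t \<Longrightarrow> list_all2 eqE (args s) (args t) \<Longrightarrow> eqE s t"

text \<open>A frame nu n.sigma is a pair (restricted names, substitution as a finite map).\<close>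
type_synonym frame = "nat set \<times> (nat \<rightharpoonup> msg)"

definition acyclic_subst :: "(nat \<rightharpoonup> msg) \<Rightarrow> bool" where
  "acyclic_subst \<sigma> \<longleftrightarrow> acyclic {(x, y). y \<in> dom \<sigma> \<and> x \<in> vars (the (\<sigma> y))}"

definition is_frame :: "frame \<Rightarrow> bool" where
  "is_frame \<phi> \<longleftrightarrow> finite (fst \<phi>) \<and> finite (dom (snd \<phi>)) \<and> acyclic_subst (snd \<phi>)"

definition sapp :: "(nat \<rightharpoonup> msg) \<Rightarrow> msg \<Rightarrow> msg" where
  "sapp \<sigma> = lmap (\<lambda>t. case t of Vr x \<Rightarrow> (case \<sigma> x of Some u \<Rightarrow> u | None \<Rightarrow> t) | _ \<Rightarrow> t)"

text \<open>Application of the (acyclic) substitution of a frame: iterate until all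
variables of the domain are eliminated (card dom + 1 steps suffice).\<close>
definition fapp :: "frame \<Rightarrow> msg \<Rightarrow> msg" where
  "fapp \<phi> U = (sapp (snd \<phi>) ^^ Suc (card (dom (snd \<phi>)))) U"

definition public :: "nat set \<Rightarrow> msg \<Rightarrow> bool" where
  "public N t \<longleftrightarrow> fn t \<inter> N = {} \<and> (\<forall>u \<in> subterms t. head u \<noteq> SPriv)"

inductive deduc :: "frame \<Rightarrow> msg \<Rightarrow> bool" where
  d_frame: "x \<in> dom (snd \<phi>) \<Longrightarrow> deduc \<phi> (fapp \<phi> (Vr x))"
| d_name: "m \<notin> fst \<phi> \<Longrightarrow> deduc \<phi> (Nm m)"
| d_fun: "is_fun t \<Longrightarrow> head t \<noteq> SPriv \<Longrightarrow> (\<forall>a \<in> set (args t). deduc \<phi> a) \<Longrightarrow> deduc \<phi> t"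
| d_eq: "deduc \<phi> t \<Longrightarrow> eqE t t' \<Longrightarrow> deduc \<phi> t'"

definition frame_repl :: "frame \<Rightarrow> nat \<Rightarrow> msg \<Rightarrow> frame" where
  "frame_repl \<phi> s M = (fst \<phi>, \<lambda>x. map_option (lmap (\<lambda>t. if t = Nm s then M else t)) (snd \<phi> x))"

text \<open>Passing a test; the renaming of restricted names is vacuous since the tests
considered are public (contain no restricted name).\<close>
definition passes :: "frame \<Rightarrow> msg \<Rightarrow> msg \<Rightarrow> bool" where
  "passes \<phi> U V \<longleftrightarrow> eqE (fapp \<phi> U) (fapp \<phi> V)"

definition stat_eq :: "frame \<Rightarrow> frame \<Rightarrow> bool" where
  "stat_eq \<phi> \<phi>' \<longleftrightarrow> dom (snd \<phi>) = dom (snd \<phi>') \<and>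
     (\<forall>U V. public (fst \<phi>) U \<and> public (fst \<phi>') U \<and> public (fst \<phi>) V \<and> public (fst \<phi>') V
        \<and> vars U \<subseteq> dom (snd \<phi>) \<and> vars V \<subseteq> dom (snd \<phi>)
        \<longrightarrow> (passes \<phi> U V \<longleftrightarrow> passes \<phi>' U V))"

definition is_enc :: "msg \<Rightarrow> bool" where
  "is_enc t \<longleftrightarrow> head t = SEnc \<or> head t = SEnca"

definition agent_enc :: "nat set \<Rightarrow> msg \<Rightarrow> nat list \<Rightarrow> bool" where
  "agent_enc N U q \<longleftrightarrow> (\<exists>n \<in> N. subt U (q @ [3]) = Some (Nm n))"

definition prob_enc :: "msg set \<Rightarrow> msg \<Rightarrow> nat list \<Rightarrow> bool" where
  "prob_enc S U q \<longleftrightarrow> (\<forall>V \<in> S. \<forall>p. subt U (q @ [3]) \<noteq> None \<and> subt V p = subt U (q @ [3])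
      \<longrightarrow> (\<exists>q'. p = q' @ [3] \<and> subt V q' = subt U q))"

definition key_ok :: "nat \<Rightarrow> msg \<Rightarrow> bool" where
  "key_ok s u \<longleftrightarrow> (case u of
       Enc M K R \<Rightarrow> s \<notin> fn K \<union> fn R
     | Enca M K R \<Rightarrow> s \<notin> fn K \<union> fn R
     | Sign U V \<Rightarrow> s \<notin> fn V
     | Pub W \<Rightarrow> s \<notin> fn W
     | Priv W \<Rightarrow> s \<notin> fn W
     | _ \<Rightarrow> True)"

definition is_destr :: "msg \<Rightarrow> bool" where
  "is_destr t \<longleftrightarrow> head t \<in> {SPi1, SPi2, SDec, SDeca, SCheck, SRetrieve}"

definition well_formed :: "frame \<Rightarrow> nat \<Rightarrow> bool" where
  "well_formed \<phi> s \<longleftrightarrow>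
     (\<forall>U \<in> ran (snd \<phi>). \<forall>q u. subt U q = Some u \<and> is_enc u \<longrightarrow>
         agent_enc (fst \<phi> - {s}) U q \<and> prob_enc (ran (snd \<phi>)) U q)
   \<and> (\<forall>U \<in> ran (snd \<phi>). \<forall>u \<in> subterms U. key_ok s u)
   \<and> (\<forall>U \<in> ran (snd \<phi>). \<forall>u \<in> subterms U. \<not> is_destr u)"

end

theory Submission
  imports Defs
begin



definition leaf :: "msg \<Rightarrow> bool" where
  "leaf t \<longleftrightarrow> (\<exists>n. t = Nm n) \<or> (\<exists>x. t = Vr x)"

lemma head_args_eq: "head s = head t \<Longrightarrow> args s = args t \<Longrightarrow> s = t"
  by (cases s; cases t; simp)

lemma args_size: "a \<in> set (args t) \<Longrightarrow> size a < size t"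
  by (cases t) auto

lemma msg_induct[case_names step]: "(\<And>t. (\<And>a. a \<in> set (args t) \<Longrightarrow> P a) \<Longrightarrow> P t) \<Longrightarrow> P t"
  by (induction t rule: measure_induct_rule[of size]) (metis args_size)

lemma subterms_rec: "subterms t = insert t (\<Union>a\<in>set (args t). subterms a)"
proof (rule set_eqI, rule iffI)
  fix u assume "u \<in> subterms t"
  then obtain p where p: "subt t p = Some u" by (auto simp: subterms_def)
  show "u \<in> insert t (\<Union>a\<in>set (args t). subterms a)"
  proof (cases p)
    case Nil then show ?thesis using p by simp
  next
    case (Cons i p')
    with p have "0 < i" "i \<le> length (args t)" "subt (args t ! (i - 1)) p' = Some u"
      by (auto split: if_splits)
    then show ?thesis by (auto simp: subterms_def intro!: bexI[of _ "args t ! (i - 1)"])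
  qed
next
  fix u assume "u \<in> insert t (\<Union>a\<in>set (args t). subterms a)"
  then show "u \<in> subterms t"
  proof
    assume "u = t" then show ?thesis by (auto simp: subterms_def intro: exI[of _ "[]"])
  next
    assume "u \<in> (\<Union>a\<in>set (args t). subterms a)"
    then obtain j p where "j < length (args t)" "subt (args t ! j) p = Some u"
      by (auto simp: subterms_def in_set_conv_nth)
    then have "subt t (Suc j # p) = Some u" by simp
    then show ?thesis unfolding subterms_def by blast
  qed
qed

lemma self_subterm[simp]: "t \<in> subterms t"
  by (subst subterms_rec) simp

lemma arg_subterm: "a \<in> set (args t) \<Longrightarrow> u \<in> subterms a \<Longrightarrow> u \<in> subterms t"
  by (subst subterms_rec) blast

lemma subterms_trans: "u \<in> subterms t \<Longrightarrow> v \<in> subterms u \<Longrightarrow> v \<in> subterms t"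
proof (induction t rule: msg_induct)
  case (step t)
  from step.prems(1) have "u = t \<or> (\<exists>a\<in>set (args t). u \<in> subterms a)"
    by (subst (asm) subterms_rec) blast
  then show ?case
  proof
    assume "u = t" then show ?thesis using step.prems by simp
  next
    assume "\<exists>a\<in>set (args t). u \<in> subterms a"
    then obtain a where "a \<in> set (args t)" "u \<in> subterms a" by blast
    then show ?thesis using step.IH step.prems(2) arg_subterm by blast
  qed
qed

lemma fn_rec: "fn t = (case t of Nm n \<Rightarrow> {n} | _ \<Rightarrow> \<Union>a\<in>set (args t). fn a)"
  apply (subst fn_def, subst subterms_rec)
  apply (cases t) apply (auto simp: fn_def)
  done

lemma vars_rec: "vars t = (case t of Vr n \<Rightarrow> {n} | _ \<Rightarrow> \<Union>a\<in>set (args t). vars a)"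
  apply (subst vars_def, subst subterms_rec)
  apply (cases t) apply (auto simp: vars_def)
  done

lemma public_rec: "public A t \<longleftrightarrow> (case t of Nm n \<Rightarrow> n \<notin> A | _ \<Rightarrow> head t \<noteq> SPriv \<and> (\<forall>a\<in>set (args t). public A a))"
  unfolding public_def
  apply (subst fn_rec, subst subterms_rec)
  apply (cases t) apply auto
  done

lemma finite_subterms: "finite (subterms t)"
  by (induction t rule: msg_induct) (subst subterms_rec, auto)

lemma finite_vars: "finite (vars t)"
  unfolding vars_def
  by (rule finite_surj[OF finite_subterms, of _ "\<lambda>u. case u of Vr x \<Rightarrow> x"]) force




definition rPi1 where "rPi1 x = (case x of Pair a b \<Rightarrow> a | _ \<Rightarrow> Pi1 x)"
definition rPi2 where "rPi2 x = (case x of Pair a b \<Rightarrow> b | _ \<Rightarrow> Pi2 x)"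
definition rRet where "rRet x = (case x of Sign a b \<Rightarrow> a | _ \<Rightarrow> Retrieve x)"
definition rDec where "rDec x k = (case x of Enc a b c \<Rightarrow> (if b = k then a else Dec x k) | _ \<Rightarrow> Dec x k)"
definition rDeca where "rDeca x k = (case x of Enca a (Pub w) c \<Rightarrow> (if k = Priv w then a else Deca x k) | _ \<Rightarrow> Deca x k)"
definition rCheck where "rCheck a b c = (if (\<exists>w. b = Sign a (Priv w) \<and> c = Pub w) then Cst ''ok'' else Check a b c)"

fun norm :: "msg \<Rightarrow> msg" where
  "norm (Nm n) = Nm n" | "norm (Vr x) = Vr x" | "norm (Cst c) = Cst c"
| "norm (Enc a b c) = Enc (norm a) (norm b) (norm c)"
| "norm (Enca a b c) = Enca (norm a) (norm b) (norm c)"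
| "norm (Pub a) = Pub (norm a)" | "norm (Priv a) = Priv (norm a)"
| "norm (Pair a b) = Pair (norm a) (norm b)"
| "norm (Sign a b) = Sign (norm a) (norm b)"
| "norm (Pi1 a) = rPi1 (norm a)" | "norm (Pi2 a) = rPi2 (norm a)"
| "norm (Retrieve a) = rRet (norm a)"
| "norm (Dec a b) = rDec (norm a) (norm b)"
| "norm (Deca a b) = rDeca (norm a) (norm b)"
| "norm (Check a b c) = rCheck (norm a) (norm b) (norm c)"

lemma norm_comp: "head s = head t \<Longrightarrow> map norm (args s) = map norm (args t) \<Longrightarrow> norm s = norm t"
  by (cases s; cases t; simp)

lemma la2_map: "list_all2 (\<lambda>a b. f a = f b) xs ys \<Longrightarrow> map f xs = map f ys"
  by (induction rule: list_all2_induct) auto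

lemma eqE_norm: "eqE s t \<Longrightarrow> norm s = norm t"
proof (induction rule: eqE.induct)
  case (ax_deca z1 z2 z3) then show ?case by (simp add: rDeca_def)
next
  case (ax_check z1 z2) then show ?case by (simp add: rCheck_def)
next
  case (cong s t)
  have "list_all2 (\<lambda>a b. norm a = norm b) (args s) (args t)"
    using cong.IH by (rule list_all2_mono) auto
  then show ?case using cong.hyps by (intro norm_comp) (auto intro: la2_map)
qed (auto simp: rPi1_def rPi2_def rDec_def rRet_def)

lemma eqE_cong_args: "head s = head t \<Longrightarrow> length (args s) = length (args t) \<Longrightarrow>
   (\<And>i. i < length (args s) \<Longrightarrow> eqE (args s ! i) (args t ! i)) \<Longrightarrow> eqE s t"
  by (rule eqE.cong) (auto simp: list_all2_conv_all_nth)

lemma eqE_Pi1: "eqE (Pi1 x) (rPi1 x)" by (cases x) (auto simp: rPi1_def intro: eqE.refl eqE.ax_pi1 eqE.ax_pi2 eqE.ax_dec eqE.ax_deca eqE.ax_check eqE.ax_retrieve)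
lemma eqE_Pi2: "eqE (Pi2 x) (rPi2 x)" by (cases x) (auto simp: rPi2_def intro: eqE.refl eqE.ax_pi1 eqE.ax_pi2 eqE.ax_dec eqE.ax_deca eqE.ax_check eqE.ax_retrieve)
lemma eqE_Ret: "eqE (Retrieve x) (rRet x)" by (cases x) (auto simp: rRet_def intro: eqE.refl eqE.ax_pi1 eqE.ax_pi2 eqE.ax_dec eqE.ax_deca eqE.ax_check eqE.ax_retrieve)
lemma eqE_Dec: "eqE (Dec x k) (rDec x k)" by (cases x) (auto simp: rDec_def intro: eqE.refl eqE.ax_pi1 eqE.ax_pi2 eqE.ax_dec eqE.ax_deca eqE.ax_check eqE.ax_retrieve)
lemma eqE_Deca: "eqE (Deca x k) (rDeca x k)"
proof (cases x)
  case (Enca a b c) then show ?thesis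
    by (cases b) (auto simp: rDeca_def intro: eqE.refl eqE.ax_pi1 eqE.ax_pi2 eqE.ax_dec eqE.ax_deca eqE.ax_check eqE.ax_retrieve)
qed (auto simp: rDeca_def intro: eqE.refl eqE.ax_pi1 eqE.ax_pi2 eqE.ax_dec eqE.ax_deca eqE.ax_check eqE.ax_retrieve)
lemma eqE_Check: "eqE (Check a b c) (rCheck a b c)" by (auto simp: rCheck_def intro: eqE.refl eqE.ax_pi1 eqE.ax_pi2 eqE.ax_dec eqE.ax_deca eqE.ax_check eqE.ax_retrieve)

lemma eqE_norm_sound: "eqE t (norm t)"
proof (induction t)
  case (Pi1 a)
  have "eqE (Pi1 a) (Pi1 (norm a))" by (rule eqE_cong_args) (use Pi1 in auto)
  from eqE.trans[OF this eqE_Pi1] show ?case by simp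
next
  case (Pi2 a)
  have "eqE (Pi2 a) (Pi2 (norm a))" by (rule eqE_cong_args) (use Pi2 in auto)
  from eqE.trans[OF this eqE_Pi2] show ?case by simp
next
  case (Retrieve a)
  have "eqE (Retrieve a) (Retrieve (norm a))" by (rule eqE_cong_args) (use Retrieve in auto)
  from eqE.trans[OF this eqE_Ret] show ?case by simp
next
  case (Dec a b)
  have "eqE (Dec a b) (Dec (norm a) (norm b))" by (rule eqE_cong_args) (use Dec in \<open>auto simp: less_Suc_eq\<close>)
  from eqE.trans[OF this eqE_Dec] show ?case by simp
next
  case (Deca a b)
  have "eqE (Deca a b) (Deca (norm a) (norm b))" by (rule eqE_cong_args) (use Deca in \<open>auto simp: less_Suc_eq\<close>)
  from eqE.trans[OF this eqE_Deca] show ?case by simp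
next
  case (Check a b c)
  have "eqE (Check a b c) (Check (norm a) (norm b) (norm c))" by (rule eqE_cong_args) (use Check in \<open>auto simp: less_Suc_eq\<close>)
  from eqE.trans[OF this eqE_Check] show ?case by simp
next
  case (Enc a b c) show ?case by (simp, rule eqE_cong_args) (use Enc in \<open>auto simp: less_Suc_eq\<close>)
next
  case (Enca a b c) show ?case by (simp, rule eqE_cong_args) (use Enca in \<open>auto simp: less_Suc_eq\<close>)
next
  case (Pair a b) show ?case by (simp, rule eqE_cong_args) (use Pair in \<open>auto simp: less_Suc_eq\<close>)
next
  case (Sign a b) show ?case by (simp, rule eqE_cong_args) (use Sign in \<open>auto simp: less_Suc_eq\<close>)
next
  case (Pub a) show ?case by (simp, rule eqE_cong_args) (use Pub in \<open>auto simp: less_Suc_eq\<close>)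
next
  case (Priv a) show ?case by (simp, rule eqE_cong_args) (use Priv in \<open>auto simp: less_Suc_eq\<close>)
qed (auto intro: eqE.refl)

lemma eqE_iff: "eqE s t \<longleftrightarrow> norm s = norm t"
proof
  assume "norm s = norm t"
  then show "eqE s t" using eqE_norm_sound[of s] eqE_norm_sound[of t]
    by (metis eqE.sym eqE.trans)
qed (rule eqE_norm)

lemma norm_idem[simp]: "norm (norm t) = norm t"
  using eqE_norm[OF eqE.sym[OF eqE_norm_sound]] by simp

lemma size_norm: "size (norm t) \<le> size t"
proof (induction t)
  case (Pi1 a) then show ?case by (auto simp: rPi1_def split: msg.splits)
next
  case (Pi2 a) then show ?case by (auto simp: rPi2_def split: msg.splits)
next
  case (Retrieve a) then show ?case by (auto simp: rRet_def split: msg.splits)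
next
  case (Dec a b) then show ?case by (auto simp: rDec_def split: msg.splits)
next
  case (Deca a b) then show ?case by (auto simp: rDeca_def split: msg.splits)
next
  case (Check a b c) then show ?case by (auto simp: rCheck_def split: msg.splits)
qed auto

abbreviation nf where "nf t \<equiv> norm t = t"

lemma nf_Pi1: "nf (Pi1 a) \<Longrightarrow> nf a \<and> (\<forall>x y. a \<noteq> Pair x y)"
  using size_norm[of a] by (auto simp: rPi1_def split: msg.splits)
lemma nf_Pi2: "nf (Pi2 a) \<Longrightarrow> nf a \<and> (\<forall>x y. a \<noteq> Pair x y)"
  using size_norm[of a] by (auto simp: rPi2_def split: msg.splits)
lemma nf_Ret: "nf (Retrieve a) \<Longrightarrow> nf a \<and> (\<forall>x y. a \<noteq> Sign x y)"
  using size_norm[of a] by (auto simp: rRet_def split: msg.splits)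
lemma nf_Dec: "nf (Dec a k) \<Longrightarrow> nf a \<and> nf k \<and> (\<forall>x c. a \<noteq> Enc x k c)"
  using size_norm[of a] by (auto simp: rDec_def split: msg.splits if_splits)
lemma nf_Deca: "nf (Deca a k) \<Longrightarrow> nf a \<and> nf k \<and> (\<forall>x w c. \<not> (a = Enca x (Pub w) c \<and> k = Priv w))"
  using size_norm[of a] by (auto simp: rDeca_def split: msg.splits if_splits)
lemma nf_Check: "nf (Check a b c) \<Longrightarrow> nf a \<and> nf b \<and> nf c \<and> \<not> (\<exists>w. b = Sign a (Priv w) \<and> c = Pub w)"
  by (auto simp: rCheck_def split: if_splits)




definition hom :: "(msg \<Rightarrow> msg) \<Rightarrow> bool" where
  "hom f \<longleftrightarrow> (\<forall>t. \<not> leaf t \<longrightarrow> head (f t) = head t \<and> args (f t) = map f (args t))"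

lemma homD: "hom f \<Longrightarrow> \<not> leaf t \<Longrightarrow> head (f t) = head t \<and> args (f t) = map f (args t)"
  by (auto simp: hom_def)

lemma leaf_head: "head s = head t \<Longrightarrow> leaf s = leaf t"
  by (cases s; cases t; simp add: leaf_def)

lemma leaf_simps[simp]: "leaf (Nm n)" "leaf (Vr x)" "\<not> leaf (Cst c)"
  "\<not> leaf (Enc a b d)" "\<not> leaf (Dec a b)" "\<not> leaf (Enca a b d)" "\<not> leaf (Deca a b)"
  "\<not> leaf (Pub a)" "\<not> leaf (Priv a)" "\<not> leaf (Pair a b)" "\<not> leaf (Pi1 a)" "\<not> leaf (Pi2 a)"
  "\<not> leaf (Sign a b)" "\<not> leaf (Check a b d)" "\<not> leaf (Retrieve a)"
  by (auto simp: leaf_def)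

lemma leaf_cases: "leaf t \<Longrightarrow> (\<And>n. t = Nm n \<Longrightarrow> P) \<Longrightarrow> (\<And>x. t = Vr x \<Longrightarrow> P) \<Longrightarrow> P"
  by (auto simp: leaf_def)

lemma hom_lmap: "hom (lmap g)"
  unfolding hom_def by (intro allI impI, case_tac t) auto

lemma hom_comp: "hom f \<Longrightarrow> hom g \<Longrightarrow> hom (f \<circ> g)"
  unfolding hom_def by (metis comp_apply leaf_head map_map)

lemma hom_funpow: assumes "hom f" shows "hom (f ^^ k)"
proof (induction k)
  case 0 then show ?case by (simp add: hom_def)
next
  case (Suc k)
  have "hom (f \<circ> (f ^^ k))" by (rule hom_comp[OF assms Suc.IH])
  then show ?case by (simp only: funpow.simps)
qed

lemma hom_simps:
  assumes "hom f"
  shows "f (Cst c) = Cst c" "f (Enc a b d) = Enc (f a) (f b) (f d)" "f (Dec a b) = Dec (f a) (f b)"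
   "f (Enca a b d) = Enca (f a) (f b) (f d)" "f (Deca a b) = Deca (f a) (f b)"
   "f (Pub a) = Pub (f a)" "f (Priv a) = Priv (f a)" "f (Pair a b) = Pair (f a) (f b)"
   "f (Pi1 a) = Pi1 (f a)" "f (Pi2 a) = Pi2 (f a)" "f (Sign a b) = Sign (f a) (f b)"
   "f (Check a b d) = Check (f a) (f b) (f d)" "f (Retrieve a) = Retrieve (f a)"
  by (rule head_args_eq; use homD[OF assms] in \<open>fastforce\<close>)+

lemma vars_leafs[simp]: "vars (Nm n) = {}" "vars (Vr x) = {x}" "fn (Nm n) = {n}" "fn (Vr x) = {}"
  by (subst vars_rec fn_rec, simp)+

lemma vars_nonleaf: "\<not> leaf t \<Longrightarrow> vars t = (\<Union>a\<in>set (args t). vars a)"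
  by (subst vars_rec) (auto simp: leaf_def split: msg.splits)

lemma fn_nonleaf: "\<not> leaf t \<Longrightarrow> fn t = (\<Union>a\<in>set (args t). fn a)"
  by (subst fn_rec) (auto simp: leaf_def split: msg.splits)

lemma public_nonleaf: "\<not> leaf t \<Longrightarrow> public A t \<longleftrightarrow> head t \<noteq> SPriv \<and> (\<forall>a\<in>set (args t). public A a)"
  by (subst public_rec) (auto simp: leaf_def split: msg.splits)

lemma public_leafs[simp]: "public A (Nm n) \<longleftrightarrow> n \<notin> A" "public A (Vr x)"
  by (subst public_rec, simp)+

lemma subterms_nonleaf_arg: "a \<in> set (args t) \<Longrightarrow> subterms a \<subseteq> subterms t"
  using arg_subterm by blast

lemma leaf_args: "leaf t \<Longrightarrow> args t = []"
  by (auto simp: leaf_def)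

lemma sapp_leafs[simp]: "sapp \<rho> (Nm n) = Nm n" "sapp \<rho> (Vr x) = (case \<rho> x of Some u \<Rightarrow> u | None \<Rightarrow> Vr x)"
  by (simp_all add: sapp_def)

lemma hom_sapp: "hom (sapp \<rho>)" unfolding sapp_def by (rule hom_lmap)

lemma funpow_sapp_Nm[simp]: "(sapp \<rho> ^^ k) (Nm n) = Nm n"
  by (induction k) auto

lemma hom_induct_eq:
  assumes "hom f" "hom g" "\<And>n. f (Nm n) = g (Nm n)" "\<And>x. f (Vr x) = g (Vr x)"
  shows "f t = g t"
proof (induction t rule: msg_induct)
  case (step t)
  show ?case
  proof (cases "leaf t")
    case True then show ?thesis using assms by (auto elim: leaf_cases)
  next
    case False then show ?thesis using homD[OF assms(1) False] homD[OF assms(2) False] step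
      by (intro head_args_eq) auto
  qed
qed

lemma vars_hom: assumes "hom f" "\<And>n. vars (f (Nm n)) = {}"
  shows "vars (f t) \<subseteq> (\<Union>x\<in>vars t. vars (f (Vr x)))"
proof (induction t rule: msg_induct)
  case (step t)
  show ?case
  proof (cases "leaf t")
    case True then show ?thesis using assms by (auto elim: leaf_cases)
  next
    case False
    have "\<not> leaf (f t)" using homD[OF assms(1) False] leaf_head False by metis
    then show ?thesis using homD[OF assms(1) False] step False
      by (auto simp: vars_nonleaf)
  qed
qed

lemma sapp_id: "vars t \<inter> dom \<rho> = {} \<Longrightarrow> sapp \<rho> t = t"
proof (induction t rule: msg_induct)
  case (step t)
  show ?case
  proof (cases "leaf t")
    case True then show ?thesis using step.prems by (auto elim!: leaf_cases split: option.splits)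
  next
    case False
    then show ?thesis using homD[OF hom_sapp False] step
      by (intro head_args_eq) (auto simp: vars_nonleaf intro!: map_idI)
  qed
qed

definition repl :: "nat \<Rightarrow> msg \<Rightarrow> msg \<Rightarrow> msg" where
  "repl s M = lmap (\<lambda>t. if t = Nm s then M else t)"

lemma hom_repl: "hom (repl s M)" unfolding repl_def by (rule hom_lmap)

lemma repl_leafs[simp]: "repl s M (Nm n) = (if n = s then M else Nm n)" "repl s M (Vr x) = Vr x"
  by (simp_all add: repl_def)

lemma repl_id: "s \<notin> fn t \<Longrightarrow> repl s M t = t"
proof (induction t rule: msg_induct)
  case (step t)
  show ?case
  proof (cases "leaf t")
    case True then show ?thesis using step.prems by (auto elim!: leaf_cases)
  next
    case False
    then show ?thesis using homD[OF hom_repl False] step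
      by (intro head_args_eq) (auto simp: fn_nonleaf intro!: map_idI)
  qed
qed

lemma repl_nonNm: "t \<noteq> Nm s \<Longrightarrow> head (repl s M t) = head t \<and> args (repl s M t) = map (repl s M) (args t)"
  by (cases "leaf t") (auto elim!: leaf_cases dest: homD[OF hom_repl])

lemma sapp_repl:
  assumes "vars M = {}"
  shows "sapp (\<lambda>x. map_option (repl s M) (\<rho> x)) (repl s M t) = repl s M (sapp \<rho> t)"
proof -
  have "(sapp (\<lambda>x. map_option (repl s M) (\<rho> x)) \<circ> repl s M) t = (repl s M \<circ> sapp \<rho>) t"
    by (rule hom_induct_eq[OF hom_comp[OF hom_sapp hom_repl] hom_comp[OF hom_repl hom_sapp]])
       (auto simp: sapp_id assms split: option.splits)
  then show ?thesis by simp
qed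

lemma funpow_sapp_repl:
  assumes "vars M = {}"
  shows "(sapp (\<lambda>x. map_option (repl s M) (\<rho> x)) ^^ k) (repl s M t) = repl s M ((sapp \<rho> ^^ k) t)"
  by (induction k) (auto simp: sapp_repl[OF assms])

lemma fapp_repl:
  assumes "closed M" "s \<notin> fn U"
  shows "fapp (frame_repl \<phi> s M) U = repl s M (fapp \<phi> U)"
proof -
  have d: "dom (\<lambda>x. map_option (repl s M) (snd \<phi> x)) = dom (snd \<phi>)" by (auto simp: dom_def)
  have e: "frame_repl \<phi> s M = (fst \<phi>, \<lambda>x. map_option (repl s M) (snd \<phi> x))"
    by (simp add: frame_repl_def repl_def)
  have "fapp (frame_repl \<phi> s M) U = (sapp (\<lambda>x. map_option (repl s M) (snd \<phi> x)) ^^ Suc (card (dom (snd \<phi>)))) (repl s M U)"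
    unfolding fapp_def e snd_conv d by (simp only: repl_id[OF assms(2)])
  also have "\<dots> = repl s M (fapp \<phi> U)"
    unfolding fapp_def by (rule funpow_sapp_repl) (use assms in \<open>simp add: closed_def\<close>)
  finally show ?thesis .
qed

lemma eqE_repl: "eqE a b \<Longrightarrow> eqE (repl s M a) (repl s M b)"
proof (induction rule: eqE.induct)
  case (cong a b)
  show ?case
  proof (cases "leaf a")
    case True
    then have "a = b" using cong.hyps(1) by (auto elim!: leaf_cases; cases b; simp)
    then show ?thesis by (simp add: eqE.refl)
  next
    case False
    then have F: "\<not> leaf b" using leaf_head cong.hyps(1) by metis
    have "list_all2 eqE (map (repl s M) (args a)) (map (repl s M) (args b))"
      using cong.IH by (auto simp: list_all2_map1 list_all2_map2 elim: list_all2_mono)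
    then show ?thesis using homD[OF hom_repl False] homD[OF hom_repl F] cong.hyps(1)
      by (intro eqE.cong) auto
  qed
qed (auto simp: hom_simps[OF hom_repl] intro: eqE.intros)

lemma eqE_repl_M: "eqE M M' \<Longrightarrow> eqE (repl s M t) (repl s M' t)"
proof (induction t rule: msg_induct)
  case (step t)
  show ?case
  proof (cases "leaf t")
    case True then show ?thesis using step.prems by (auto elim!: leaf_cases intro: eqE.refl)
  next
    case False
    then show ?thesis using homD[OF hom_repl False, of s M] homD[OF hom_repl False, of s M'] step
      by (intro eqE.cong) (auto simp: list_all2_map1 list_all2_map2 intro: list.rel_refl_strong)
  qed
qed




lemma list_choose: "(\<forall>x\<in>set xs. \<exists>y. P x y) \<Longrightarrow> \<exists>ys. list_all2 P xs ys"
  by (induction xs) (auto simp: list_all2_Cons1)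

lemma mk_term: "\<not> leaf t \<Longrightarrow> length us = length (args t) \<Longrightarrow> \<exists>U. head U = head t \<and> args U = us"
proof (cases t)
  case (Enc a b c)
  assume "length us = length (args t)"
  then obtain x y z where "us = [x, y, z]" using Enc by (auto simp: length_Suc_conv)
  then show ?thesis using Enc by (intro exI[of _ "Enc x y z"]) auto
next
  case (Enca a b c)
  assume "length us = length (args t)"
  then obtain x y z where "us = [x, y, z]" using Enca by (auto simp: length_Suc_conv)
  then show ?thesis using Enca by (intro exI[of _ "Enca x y z"]) auto
next
  case (Check a b c)
  assume "length us = length (args t)"
  then obtain x y z where "us = [x, y, z]" using Check by (auto simp: length_Suc_conv)
  then show ?thesis using Check by (intro exI[of _ "Check x y z"]) auto
next
  case (Dec a b)
  assume "length us = length (args t)"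
  then obtain x y where "us = [x, y]" using Dec by (auto simp: length_Suc_conv)
  then show ?thesis using Dec by (intro exI[of _ "Dec x y"]) auto
next
  case (Deca a b)
  assume "length us = length (args t)"
  then obtain x y where "us = [x, y]" using Deca by (auto simp: length_Suc_conv)
  then show ?thesis using Deca by (intro exI[of _ "Deca x y"]) auto
next
  case (Pair a b)
  assume "length us = length (args t)"
  then obtain x y where "us = [x, y]" using Pair by (auto simp: length_Suc_conv)
  then show ?thesis using Pair by (intro exI[of _ "Pair x y"]) auto
next
  case (Sign a b)
  assume "length us = length (args t)"
  then obtain x y where "us = [x, y]" using Sign by (auto simp: length_Suc_conv)
  then show ?thesis using Sign by (intro exI[of _ "Sign x y"]) auto
next
  case (Pub a)
  assume "length us = length (args t)"
  then obtain x where "us = [x]" using Pub by (auto simp: length_Suc_conv)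
  then show ?thesis using Pub by (intro exI[of _ "Pub x"]) auto
next
  case (Priv a)
  assume "length us = length (args t)"
  then obtain x where "us = [x]" using Priv by (auto simp: length_Suc_conv)
  then show ?thesis using Priv by (intro exI[of _ "Priv x"]) auto
next
  case (Pi1 a)
  assume "length us = length (args t)"
  then obtain x where "us = [x]" using Pi1 by (auto simp: length_Suc_conv)
  then show ?thesis using Pi1 by (intro exI[of _ "Pi1 x"]) auto
next
  case (Pi2 a)
  assume "length us = length (args t)"
  then obtain x where "us = [x]" using Pi2 by (auto simp: length_Suc_conv)
  then show ?thesis using Pi2 by (intro exI[of _ "Pi2 x"]) auto
next
  case (Retrieve a)
  assume "length us = length (args t)"
  then obtain x where "us = [x]" using Retrieve by (auto simp: length_Suc_conv)
  then show ?thesis using Retrieve by (intro exI[of _ "Retrieve x"]) auto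
next
  case (Cst c)
  assume "length us = length (args t)"
  then show ?thesis using Cst by (intro exI[of _ "Cst c"]) auto
qed auto

lemma fapp_eq: "fapp \<phi> = (sapp (snd \<phi>) ^^ Suc (card (dom (snd \<phi>))))"
  by (rule ext) (simp only: fapp_def)

lemma hom_fapp: "hom (fapp \<phi>)"
  unfolding fapp_eq by (rule hom_funpow[OF hom_sapp])

lemma is_fun_leaf: "is_fun t \<longleftrightarrow> \<not> leaf t"
  by (auto simp: is_fun_def leaf_def)

lemma recipe: "deduc \<phi> t \<Longrightarrow> \<exists>U. public (fst \<phi>) U \<and> vars U \<subseteq> dom (snd \<phi>) \<and> eqE (fapp \<phi> U) t"
proof (induction rule: deduc.induct)
  case (d_frame x \<phi>) then show ?case by (intro exI[of _ "Vr x"]) (auto intro: eqE.refl)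
next
  case (d_name m \<phi>) then show ?case
    by (intro exI[of _ "Nm m"]) (simp add: fapp_def eqE.refl)
next
  case (d_fun t \<phi>)
  then obtain us where us: "list_all2 (\<lambda>a U. public (fst \<phi>) U \<and> vars U \<subseteq> dom (snd \<phi>) \<and> eqE (fapp \<phi> U) a) (args t) us"
  proof -
    have "\<forall>a\<in>set (args t). \<exists>U. public (fst \<phi>) U \<and> vars U \<subseteq> dom (snd \<phi>) \<and> eqE (fapp \<phi> U) a"
      using d_fun.IH by blast
    from list_choose[OF this] show ?thesis using that by blast
  qed
  have nl: "\<not> leaf t" using d_fun.hyps is_fun_leaf by blast
  obtain U where U: "head U = head t" "args U = us"
    using mk_term[OF nl list_all2_lengthD[OF us, symmetric]] by blast
  have nlU: "\<not> leaf U" using U nl leaf_head by metis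
  have pu: "\<forall>a\<in>set us. public (fst \<phi>) a \<and> vars a \<subseteq> dom (snd \<phi>)"
  proof
    fix a assume "a \<in> set us"
    then obtain i where i: "i < length us" "a = us ! i" by (auto simp: in_set_conv_nth)
    show "public (fst \<phi>) a \<and> vars a \<subseteq> dom (snd \<phi>)"
      using list_all2_nthD2[OF us i(1)] i(2) by blast
  qed
  have "public (fst \<phi>) U" using U nlU pu d_fun.hyps(2)
    by (simp add: public_nonleaf)
  moreover have "vars U \<subseteq> dom (snd \<phi>)" using U nlU pu
    by (simp add: vars_nonleaf) blast
  moreover have "list_all2 eqE (map (fapp \<phi>) us) (args t)"
    using us unfolding list_all2_conv_all_nth by (simp add: eqE.sym)
  then have "eqE (fapp \<phi> U) t"
    using homD[OF hom_fapp nlU, of \<phi>] U by (intro eqE.cong) simp_all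
  ultimately show ?case by blast
next
  case (d_eq \<phi> t t')
  then obtain U where "public (fst \<phi>) U" "vars U \<subseteq> dom (snd \<phi>)" "eqE (fapp \<phi> U) t" by blast
  then show ?case using eqE.trans[OF _ d_eq.hyps(2)] by blast
qed

lemma easy_dir:
  assumes "s \<in> fst \<phi>" "deduc \<phi> (Nm s)"
  shows "\<not> stat_eq (frame_repl \<phi> s (Cst ''a'')) (frame_repl \<phi> s (Cst ''b''))"
proof
  assume st: "stat_eq (frame_repl \<phi> s (Cst ''a'')) (frame_repl \<phi> s (Cst ''b''))"
  obtain U where U: "public (fst \<phi>) U" "vars U \<subseteq> dom (snd \<phi>)" "eqE (fapp \<phi> U) (Nm s)"
    using recipe[OF assms(2)] by blast
  have sU: "s \<notin> fn U" using U(1) assms(1) by (auto simp: public_def)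
  have cl: "closed (Cst c)" for c by (simp add: closed_def vars_nonleaf)
  have fst: "fst (frame_repl \<phi> s M) = fst \<phi>" for M by (simp add: frame_repl_def)
  have dm: "dom (snd (frame_repl \<phi> s M)) = dom (snd \<phi>)" for M by (auto simp: frame_repl_def dom_def)
  have pc: "public A (Cst c)" for A c by (simp add: public_nonleaf)
  have vc: "vars (Cst c) = {}" for c by (simp add: vars_nonleaf)
  have p: "eqE (fapp (frame_repl \<phi> s (Cst c)) U) (fapp (frame_repl \<phi> s (Cst c)) (Cst ''a'')) \<longleftrightarrow> eqE (Cst c) (Cst ''a'')" for c
  proof -
    have "eqE (fapp (frame_repl \<phi> s (Cst c)) U) (Cst c)"
      using eqE_repl[OF U(3), of s "Cst c"] fapp_repl[OF cl sU] by simp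
    moreover have "fapp (frame_repl \<phi> s (Cst c)) (Cst ''a'') = Cst ''a''"
      by (rule hom_simps(1)[OF hom_fapp])
    ultimately show ?thesis by (metis eqE.sym eqE.trans)
  qed
  have "passes (frame_repl \<phi> s (Cst ''a'')) U (Cst ''a'')"
    unfolding passes_def using p[of "''a''"] by (simp add: eqE.refl)
  then have "passes (frame_repl \<phi> s (Cst ''b'')) U (Cst ''a'')"
  proof -
    have "\<forall>U V. public (fst \<phi>) U \<and> public (fst \<phi>) U \<and> public (fst \<phi>) V \<and> public (fst \<phi>) V
        \<and> vars U \<subseteq> dom (snd \<phi>) \<and> vars V \<subseteq> dom (snd \<phi>)
        \<longrightarrow> (passes (frame_repl \<phi> s (Cst ''a'')) U V \<longleftrightarrow> passes (frame_repl \<phi> s (Cst ''b'')) U V)"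
      using st unfolding stat_eq_def fst dm by blast
    then have "passes (frame_repl \<phi> s (Cst ''a'')) U (Cst ''a'') \<longleftrightarrow> passes (frame_repl \<phi> s (Cst ''b'')) U (Cst ''a'')"
      using U(1,2) pc vc by blast
    then show ?thesis using \<open>passes (frame_repl \<phi> s (Cst ''a'')) U (Cst ''a'')\<close> by blast
  qed
  then have "eqE (Cst ''b'') (Cst ''a'')" unfolding passes_def using p by blast
  then show False by (simp add: eqE_iff)
qed




lemma subt_append: "subt t (p @ q) = (case subt t p of None \<Rightarrow> None | Some v \<Rightarrow> subt v q)"
  by (induction p arbitrary: t) auto

fun exposed :: "nat set \<Rightarrow> msg \<Rightarrow> bool" where
  "exposed A (Nm n) = (n \<in> A)" | "exposed A (Vr x) = False" | "exposed A (Cst c) = False"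
| "exposed A (Enc a b c) = False" | "exposed A (Enca a b c) = False"
| "exposed A (Dec a b) = (exposed A a \<or> exposed A b)"
| "exposed A (Deca a b) = (exposed A a \<or> exposed A b)"
| "exposed A (Pub a) = exposed A a" | "exposed A (Priv a) = exposed A a"
| "exposed A (Pair a b) = (exposed A a \<or> exposed A b)"
| "exposed A (Pi1 a) = exposed A a" | "exposed A (Pi2 a) = exposed A a"
| "exposed A (Sign a b) = (exposed A a \<or> exposed A b)"
| "exposed A (Check a b c) = (exposed A a \<or> exposed A b \<or> exposed A c)"
| "exposed A (Retrieve a) = exposed A a"

lemma exposed_nonleaf: "\<not> leaf t \<Longrightarrow> \<not> is_enc t \<Longrightarrow> exposed A t = (\<exists>a\<in>set (args t). exposed A a)"
  by (cases t) (auto simp: is_enc_def)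

lemma exposed_enc: "is_enc t \<Longrightarrow> \<not> exposed A t"
  by (cases t) (auto simp: is_enc_def)

lemma exposed_Un: "exposed (A \<union> B) t \<longleftrightarrow> exposed A t \<or> exposed B t"
  by (induction t) auto

lemma exposed_fn: "exposed A t \<Longrightarrow> \<exists>n\<in>A. n \<in> fn t"
proof (induction t rule: msg_induct)
  case (step t)
  show ?case
  proof (cases "leaf t")
    case True then show ?thesis using step.prems by (auto elim!: leaf_cases)
  next
    case False
    then have "\<not> is_enc t" using step.prems exposed_enc by blast
    then obtain a where "a \<in> set (args t)" "exposed A a" using exposed_nonleaf False step.prems by blast
    then obtain n where "n \<in> A" "n \<in> fn a" using step.IH by blast
    then show ?thesis using \<open>a \<in> set (args t)\<close> False by (auto simp: fn_nonleaf)
  qed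
qed

lemma exposed_pos: "exposed A u \<Longrightarrow> \<exists>w n. subt u w = Some (Nm n) \<and> n \<in> A \<and>
   (\<forall>w1 w2 v. w = w1 @ w2 \<and> w2 \<noteq> [] \<and> subt u w1 = Some v \<longrightarrow> \<not> is_enc v)"
proof (induction u rule: msg_induct)
  case (step t)
  show ?case
  proof (cases "leaf t")
    case True then show ?thesis using step.prems by (auto elim!: leaf_cases intro!: exI[of _ "[]"])
  next
    case False
    then have ne: "\<not> is_enc t" using step.prems exposed_enc by blast
    then obtain a where a: "a \<in> set (args t)" "exposed A a" using exposed_nonleaf False step.prems by blast
    then obtain j where j: "j < length (args t)" "args t ! j = a" by (auto simp: in_set_conv_nth)
    obtain w n where w: "subt a w = Some (Nm n)" "n \<in> A"
      "\<forall>w1 w2 v. w = w1 @ w2 \<and> w2 \<noteq> [] \<and> subt a w1 = Some v \<longrightarrow> \<not> is_enc v"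
      using step.IH[OF a] by blast
    show ?thesis
    proof (intro exI conjI allI impI)
      show "subt t (Suc j # w) = Some (Nm n)" using j w by simp
      show "n \<in> A" by fact
      fix w1 w2 v assume h: "Suc j # w = w1 @ w2 \<and> w2 \<noteq> [] \<and> subt t w1 = Some v"
      show "\<not> is_enc v"
      proof (cases w1)
        case Nil then show ?thesis using h ne by simp
      next
        case (Cons i w1')
        then have "w = w1' @ w2" "i = Suc j" using h by auto
        moreover have "subt a w1' = Some v" using h Cons j \<open>i = Suc j\<close> by simp
        ultimately show ?thesis using w(3) h by blast
      qed
    qed
  qed
qed

definition df :: "msg \<Rightarrow> bool" where "df t \<longleftrightarrow> (\<forall>u\<in>subterms t. \<not> is_destr u)"

lemma df_rec: "df t \<longleftrightarrow> \<not> is_destr t \<and> (\<forall>a\<in>set (args t). df a)"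
  unfolding df_def by (subst subterms_rec) auto

lemma df_simps[simp]: "df (Nm n)" "df (Vr x)" "df (Cst c)"
  "df (Enc a b d) = (df a \<and> df b \<and> df d)" "df (Enca a b d) = (df a \<and> df b \<and> df d)"
  "df (Pub a) = df a" "df (Priv a) = df a" "df (Pair a b) = (df a \<and> df b)" "df (Sign a b) = (df a \<and> df b)"
  "\<not> df (Dec a b)" "\<not> df (Deca a b)" "\<not> df (Pi1 a)" "\<not> df (Pi2 a)" "\<not> df (Retrieve a)"
  "\<not> df (Check a b d)"
  by (simp_all add: df_rec[of "Nm n"] df_rec[of "Vr x"] df_rec[of "Cst c"] df_rec[of "Enc a b d"]
     df_rec[of "Enca a b d"] df_rec[of "Pub a"] df_rec[of "Priv a"] df_rec[of "Pair a b"] df_rec[of "Sign a b"]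
     df_rec[of "Dec a b"] df_rec[of "Deca a b"] df_rec[of "Pi1 a"] df_rec[of "Pi2 a"] df_rec[of "Retrieve a"]
     df_rec[of "Check a b d"] is_destr_def)

lemma df_nf: "df t \<Longrightarrow> nf t"
  by (induction t) auto

lemma df_repl: "df t \<Longrightarrow> nf M \<Longrightarrow> nf (repl s M t)"
  by (induction t) (auto simp: hom_simps[OF hom_repl])

lemma df_sapp: "df t \<Longrightarrow> (\<forall>x\<in>dom \<rho>. df (the (\<rho> x))) \<Longrightarrow> df (sapp \<rho> t)"
proof (induction t rule: msg_induct)
  case (step t)
  show ?case
  proof (cases "leaf t")
    case True then show ?thesis using step.prems
      by (auto elim!: leaf_cases split: option.splits) (metis domI option.sel)
  next
    case False
    then show ?thesis using step homD[OF hom_sapp False, of \<rho>]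
      unfolding df_rec[of "sapp \<rho> t"] df_rec[of t] by (auto simp: is_destr_def)
  qed
qed

lemma df_funpow: "df t \<Longrightarrow> (\<forall>x\<in>dom \<rho>. df (the (\<rho> x))) \<Longrightarrow> df ((sapp \<rho> ^^ k) t)"
  by (induction k) (simp_all add: df_sapp)

lemma funpow_sapp_Vr_None: "\<rho> x = None \<Longrightarrow> (sapp \<rho> ^^ k) (Vr x) = Vr x"
  by (induction k) auto

locale WF =
  fixes \<phi> :: frame and s :: nat
  assumes isf: "is_frame \<phi>" and sN: "s \<in> fst \<phi>" and wff: "well_formed \<phi> s"
begin

abbreviation "\<sigma> \<equiv> snd \<phi>"
abbreviation "F \<equiv> fapp \<phi>"

definition Rel where "Rel = {(x, y). y \<in> dom \<sigma> \<and> x \<in> vars (the (\<sigma> y))}"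

lemma finite_dom: "finite (dom \<sigma>)" using isf by (simp add: is_frame_def)

lemma finite_Rel: "finite Rel"
proof -
  have "Rel \<subseteq> (\<Union>y\<in>dom \<sigma>. vars (the (\<sigma> y))) \<times> dom \<sigma>" by (auto simp: Rel_def)
  then show ?thesis using finite_dom finite_vars by (meson finite_SigmaI finite_UN_I finite_subset)
qed

lemma acyclic_Rel: "acyclic Rel"
  using isf by (simp add: is_frame_def acyclic_subst_def Rel_def)

lemma wf_Rel: "wf Rel" using finite_acyclic_wf finite_Rel acyclic_Rel by blast

definition dd where "dd x = card ({y. (y, x) \<in> Rel\<^sup>+} \<inter> dom \<sigma>)"

lemma dd_less: assumes "(z, x) \<in> Rel" "z \<in> dom \<sigma>" shows "dd z < dd x"
proof -
  have "{y. (y, z) \<in> Rel\<^sup>+} \<inter> dom \<sigma> \<subset> {y. (y, x) \<in> Rel\<^sup>+} \<inter> dom \<sigma>"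
  proof
    show "{y. (y, z) \<in> Rel\<^sup>+} \<inter> dom \<sigma> \<subseteq> {y. (y, x) \<in> Rel\<^sup>+} \<inter> dom \<sigma>"
      using assms(1) by (auto intro: trancl_into_trancl)
    have "z \<in> {y. (y, x) \<in> Rel\<^sup>+} \<inter> dom \<sigma>" using assms by auto
    moreover have "z \<notin> {y. (y, z) \<in> Rel\<^sup>+}" using acyclic_Rel by (auto simp: acyclic_def)
    ultimately show "{y. (y, z) \<in> Rel\<^sup>+} \<inter> dom \<sigma> \<noteq> {y. (y, x) \<in> Rel\<^sup>+} \<inter> dom \<sigma>" by blast
  qed
  then show ?thesis unfolding dd_def by (rule psubset_card_mono[OF finite_Int[OF disjI2[OF finite_dom]]])
qed

lemma dd_le: "dd x \<le> card (dom \<sigma>)"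
  unfolding dd_def by (rule card_mono[OF finite_dom]) auto

lemma stab: "\<forall>k \<ge> dd x. vars ((sapp \<sigma> ^^ Suc k) (Vr x)) \<inter> dom \<sigma> = {}"
proof (induction x rule: wf_induct_rule[OF wf_Rel])
  case (1 x)
  show ?case
  proof (intro allI impI)
    fix k assume k: "dd x \<le> k"
    show "vars ((sapp \<sigma> ^^ Suc k) (Vr x)) \<inter> dom \<sigma> = {}"
    proof (cases "x \<in> dom \<sigma>")
      case False
      then show ?thesis using funpow_sapp_Vr_None[of \<sigma> x "Suc k"] by (auto simp: domIff)
    next
      case True
      have sv: "sapp \<sigma> (Vr x) = the (\<sigma> x)" using True by (auto simp: domIff)
      have e: "(sapp \<sigma> ^^ Suc k) (Vr x) = (sapp \<sigma> ^^ k) (the (\<sigma> x))"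
        by (simp only: funpow_Suc_right comp_def sv)
      have V: "vars ((sapp \<sigma> ^^ k) (the (\<sigma> x))) \<subseteq> (\<Union>z\<in>vars (the (\<sigma> x)). vars ((sapp \<sigma> ^^ k) (Vr z)))"
        by (rule vars_hom[OF hom_funpow[OF hom_sapp]]) simp
      have W: "vars ((sapp \<sigma> ^^ k) (Vr z)) \<inter> dom \<sigma> = {}" if z: "z \<in> vars (the (\<sigma> x))" for z
      proof (cases "z \<in> dom \<sigma>")
        case False
        then show ?thesis using funpow_sapp_Vr_None[of \<sigma> z k] by (auto simp: domIff)
      next
        case zd: True
        have zx: "(z, x) \<in> Rel" using z True by (auto simp: Rel_def)
        have "dd z < dd x" by (rule dd_less[OF zx zd])
        then obtain k' where "k = Suc k'" "dd z \<le> k'" using k by (cases k) auto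
        then show ?thesis using 1[OF zx] by blast
      qed
      show ?thesis unfolding e
      proof (rule equals0I)
        fix y assume y: "y \<in> vars ((sapp \<sigma> ^^ k) (the (\<sigma> x))) \<inter> dom \<sigma>"
        then obtain z where z: "z \<in> vars (the (\<sigma> x))" "y \<in> vars ((sapp \<sigma> ^^ k) (Vr z))"
          using V by blast
        show False using W[OF z(1)] z(2) y by blast
      qed
    qed
  qed
qed

lemma F_def': "F = sapp \<sigma> ^^ Suc (card (dom \<sigma>))" by (rule fapp_eq)

lemma F_Vr_dom_free: "vars (F (Vr x)) \<inter> dom \<sigma> = {}"
  using stab[of x] dd_le[of x] unfolding F_def' by blast

lemma hom_F: "hom F" by (rule hom_fapp)

lemma F_Nm[simp]: "F (Nm n) = Nm n" by (simp add: F_def')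

lemma F_Vr: "x \<in> dom \<sigma> \<Longrightarrow> F (Vr x) = F (the (\<sigma> x))"
proof -
  assume x: "x \<in> dom \<sigma>"
  have "F (Vr x) = sapp \<sigma> (F (Vr x))" using sapp_id[OF F_Vr_dom_free] by simp
  also have "\<dots> = (sapp \<sigma> ^^ Suc (card (dom \<sigma>))) (sapp \<sigma> (Vr x))"
    unfolding F_def' by (simp only: funpow_swap1)
  also have "\<dots> = F (the (\<sigma> x))"
  proof -
    have sv: "sapp \<sigma> (Vr x) = the (\<sigma> x)" using x by (auto simp: domIff)
    show ?thesis unfolding F_def' by (simp only: sv)
  qed
  finally show ?thesis .
qed

lemma F_Vr_None: "x \<notin> dom \<sigma> \<Longrightarrow> F (Vr x) = Vr x"
  unfolding F_def' by (rule funpow_sapp_Vr_None) (auto simp: domIff)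

end



lemma list_snoc3: "p @ w = q' @ [3::nat] \<Longrightarrow> w \<noteq> [] \<Longrightarrow> \<exists>w'. w = w' @ [3] \<and> q' = p @ w'"
  by (cases w rule: rev_exhaust) auto

lemma ded_Pi1: "deduc \<phi> x \<Longrightarrow> deduc \<phi> (Pi1 x)" by (rule d_fun) (auto simp: is_fun_def)
lemma ded_Pi2: "deduc \<phi> x \<Longrightarrow> deduc \<phi> (Pi2 x)" by (rule d_fun) (auto simp: is_fun_def)
lemma ded_Ret: "deduc \<phi> x \<Longrightarrow> deduc \<phi> (Retrieve x)" by (rule d_fun) (auto simp: is_fun_def)
lemma ded_Dec: "deduc \<phi> x \<Longrightarrow> deduc \<phi> k \<Longrightarrow> deduc \<phi> (Dec x k)" by (rule d_fun) (auto simp: is_fun_def)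
lemma ded_Deca: "deduc \<phi> x \<Longrightarrow> deduc \<phi> k \<Longrightarrow> deduc \<phi> (Deca x k)" by (rule d_fun) (auto simp: is_fun_def)

lemma repl_eq_Nm: "t \<noteq> Nm s \<Longrightarrow> repl s M t = Nm r \<Longrightarrow> t = Nm r"
  by (cases t) (auto simp: hom_simps[OF hom_repl] split: if_splits)
lemma repl_eq_Enc: "t \<noteq> Nm s \<Longrightarrow> repl s M t = Enc x y z \<Longrightarrow> \<exists>a b c. t = Enc a b c \<and> repl s M a = x \<and> repl s M b = y \<and> repl s M c = z"
  by (cases t) (auto simp: hom_simps[OF hom_repl] split: if_splits)
lemma repl_eq_Enca: "t \<noteq> Nm s \<Longrightarrow> repl s M t = Enca x y z \<Longrightarrow> \<exists>a b c. t = Enca a b c \<and> repl s M a = x \<and> repl s M b = y \<and> repl s M c = z"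
  by (cases t) (auto simp: hom_simps[OF hom_repl] split: if_splits)
lemma repl_eq_Pair: "t \<noteq> Nm s \<Longrightarrow> repl s M t = Pair x y \<Longrightarrow> \<exists>a b. t = Pair a b"
  by (cases t) (auto simp: hom_simps[OF hom_repl] split: if_splits)
lemma repl_eq_Sign: "t \<noteq> Nm s \<Longrightarrow> repl s M t = Sign x y \<Longrightarrow> \<exists>a b. t = Sign a b \<and> repl s M a = x \<and> repl s M b = y"
  by (cases t) (auto simp: hom_simps[OF hom_repl] split: if_splits)
lemma repl_eq_Pub: "t \<noteq> Nm s \<Longrightarrow> repl s M t = Pub x \<Longrightarrow> \<exists>a. t = Pub a \<and> repl s M a = x"
  by (cases t) (auto simp: hom_simps[OF hom_repl] split: if_splits)
lemma repl_eq_Priv: "t \<noteq> Nm s \<Longrightarrow> repl s M t = Priv x \<Longrightarrow> \<exists>a. t = Priv a \<and> repl s M a = x"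
  by (cases t) (auto simp: hom_simps[OF hom_repl] split: if_splits)

lemma rPi1_nr: "(\<forall>x y. X \<noteq> Pair x y) \<Longrightarrow> rPi1 X = Pi1 X" by (cases X) (auto simp: rPi1_def)
lemma rPi2_nr: "(\<forall>x y. X \<noteq> Pair x y) \<Longrightarrow> rPi2 X = Pi2 X" by (cases X) (auto simp: rPi2_def)
lemma rRet_nr: "(\<forall>x y. X \<noteq> Sign x y) \<Longrightarrow> rRet X = Retrieve X" by (cases X) (auto simp: rRet_def)
lemma rDec_nr: "(\<forall>x c. X \<noteq> Enc x K c) \<Longrightarrow> rDec X K = Dec X K" by (cases X) (auto simp: rDec_def)
lemma rDeca_nr: assumes "(\<forall>x w c. \<not> (X = Enca x (Pub w) c \<and> K = Priv w))" shows "rDeca X K = Deca X K"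
proof (cases X)
  case (Enca a b c) then show ?thesis using assms by (cases b) (auto simp: rDeca_def)
qed (auto simp: rDeca_def)
lemma rCheck_nr: "\<not> (\<exists>w. b = Sign a (Priv w) \<and> c = Pub w) \<Longrightarrow> rCheck a b c = Check a b c"
  by (simp add: rCheck_def)

context WF
begin

lemma W1: "U \<in> ran \<sigma> \<Longrightarrow> subt U q = Some u \<Longrightarrow> is_enc u \<Longrightarrow> agent_enc (fst \<phi> - {s}) U q \<and> prob_enc (ran \<sigma>) U q"
  using wff unfolding well_formed_def by blast
lemma W2: "U \<in> ran \<sigma> \<Longrightarrow> u \<in> subterms U \<Longrightarrow> key_ok s u"
  using wff unfolding well_formed_def by blast
lemma W3: "U \<in> ran \<sigma> \<Longrightarrow> u \<in> subterms U \<Longrightarrow> \<not> is_destr u"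
  using wff unfolding well_formed_def by blast

lemma dom_ran: "z \<in> dom \<sigma> \<Longrightarrow> the (\<sigma> z) \<in> ran \<sigma>"
  by (auto simp: ran_def dom_def)

lemma df_ran: "U \<in> ran \<sigma> \<Longrightarrow> df U" using W3 by (auto simp: df_def)

lemma df_F: "df t \<Longrightarrow> df (F t)"
  unfolding F_def' by (rule df_funpow) (auto intro: df_ran dom_ran)

lemma sub_props: "U \<in> ran \<sigma> \<Longrightarrow> u \<in> subterms U \<Longrightarrow> \<forall>v\<in>subterms u. key_ok s v \<and> \<not> is_destr v"
  using W2 W3 subterms_trans by blast

definition Rand where
  "Rand = {r. \<exists>U\<in>ran \<sigma>. \<exists>q u. subt U q = Some u \<and> is_enc u \<and> subt U (q @ [3]) = Some (Nm r)}"

lemma Rand_sub: "Rand \<subseteq> fst \<phi> - {s}"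
proof
  fix r assume "r \<in> Rand"
  then obtain U q u where "U \<in> ran \<sigma>" "subt U q = Some u" "is_enc u" "subt U (q @ [3]) = Some (Nm r)"
    by (auto simp: Rand_def)
  moreover have "agent_enc (fst \<phi> - {s}) U q" using W1 calculation(1-3) by blast
  ultimately obtain n where "n \<in> fst \<phi> - {s}" "subt U (q @ [3]) = Some (Nm n)" by (auto simp: agent_enc_def)
  then show "r \<in> fst \<phi> - {s}" using \<open>subt U (q @ [3]) = Some (Nm r)\<close> by simp
qed

lemma s_Rand: "s \<notin> Rand" using Rand_sub by blast

definition EEraw where "EEraw = {e. \<exists>U\<in>ran \<sigma>. e \<in> subterms U \<and> is_enc e}"
definition EE where "EE = F ` EEraw"

lemma raw_shape: assumes "e \<in> EEraw"
  shows "\<exists>U q m k r. U \<in> ran \<sigma> \<and> subt U q = Some e \<and> (e = Enc m k (Nm r) \<or> e = Enca m k (Nm r)) \<and> r \<in> Rand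
     \<and> subt U (q @ [3]) = Some (Nm r)"
proof -
  obtain U q where U: "U \<in> ran \<sigma>" "subt U q = Some e" "is_enc e"
    using assms by (auto simp: EEraw_def subterms_def)
  have "agent_enc (fst \<phi> - {s}) U q" using W1 U by blast
  then obtain n where n: "subt U (q @ [3]) = Some (Nm n)" by (auto simp: agent_enc_def)
  have nR: "n \<in> Rand" using U n by (auto simp: Rand_def)
  have e3: "subt e [3] = Some (Nm n)" using n U(2) by (simp add: subt_append)
  obtain m k c where mkc: "e = Enc m k c \<or> e = Enca m k c" using U(3) by (cases e) (auto simp: is_enc_def)
  then have "c = Nm n" using e3 by auto
  then show ?thesis using U n nR mkc by blast
qed

lemma raw_unique:
  assumes "U1 \<in> ran \<sigma>" "subt U1 q1 = Some e1" "is_enc e1" "subt U1 (q1 @ [3]) = Some (Nm r)"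
    "U2 \<in> ran \<sigma>" "subt U2 q2 = Some e2" "subt U2 (q2 @ [3]) = Some (Nm r)"
  shows "e1 = e2"
proof -
  have "prob_enc (ran \<sigma>) U1 q1" using W1 assms(1-3) by blast
  then have "\<exists>q'. q2 @ [3] = q' @ [3] \<and> subt U2 q' = subt U1 q1"
    unfolding prob_enc_def using assms(4,5,7) by auto
  then show ?thesis using assms(2,6) by auto
qed

lemma EE_shape: assumes "E \<in> EE"
  shows "\<exists>U q m k r. U \<in> ran \<sigma> \<and> subt U q = Some (Enc m k (Nm r)) \<and> E = Enc (F m) (F k) (Nm r) \<and> r \<in> Rand
       \<and> subt U (q @ [3]) = Some (Nm r)
     \<or> U \<in> ran \<sigma> \<and> subt U q = Some (Enca m k (Nm r)) \<and> E = Enca (F m) (F k) (Nm r) \<and> r \<in> Rand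
       \<and> subt U (q @ [3]) = Some (Nm r)"
proof -
  obtain e where e: "e \<in> EEraw" "E = F e" using assms by (auto simp: EE_def)
  obtain U q m k r where h: "U \<in> ran \<sigma>" "subt U q = Some e" "e = Enc m k (Nm r) \<or> e = Enca m k (Nm r)"
    "r \<in> Rand" "subt U (q @ [3]) = Some (Nm r)" using raw_shape[OF e(1)] by blast
  have FF: "F (Enc m k (Nm r)) = Enc (F m) (F k) (Nm r)" "F (Enca m k (Nm r)) = Enca (F m) (F k) (Nm r)"
    by (simp_all add: hom_simps[OF hom_F])
  from h(3) show ?thesis
  proof
    assume "e = Enc m k (Nm r)" then show ?thesis using h e(2) FF by blast
  next
    assume "e = Enca m k (Nm r)" then show ?thesis using h e(2) FF by blast
  qed
qed

lemma EE_enc: "E \<in> EE \<Longrightarrow> is_enc E"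
  using EE_shape[of E] by (auto simp: is_enc_def)

lemma EE_third: "E \<in> EE \<Longrightarrow> \<exists>a b r. r \<in> Rand \<and> (E = Enc a b (Nm r) \<or> E = Enca a b (Nm r))"
  using EE_shape[of E] by blast

lemma EE_unique: assumes "E1 \<in> EE" "E2 \<in> EE" "args E1 ! 2 = args E2 ! 2" shows "E1 = E2"
proof -
  obtain e1 e2 where e: "e1 \<in> EEraw" "E1 = F e1" "e2 \<in> EEraw" "E2 = F e2" using assms by (auto simp: EE_def)
  obtain U1 q1 m1 k1 r1 where 1: "U1 \<in> ran \<sigma>" "subt U1 q1 = Some e1" "e1 = Enc m1 k1 (Nm r1) \<or> e1 = Enca m1 k1 (Nm r1)"
    "subt U1 (q1 @ [3]) = Some (Nm r1)" using raw_shape[OF e(1)] by blast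
  obtain U2 q2 m2 k2 r2 where 2: "U2 \<in> ran \<sigma>" "subt U2 q2 = Some e2" "e2 = Enc m2 k2 (Nm r2) \<or> e2 = Enca m2 k2 (Nm r2)"
    "subt U2 (q2 @ [3]) = Some (Nm r2)" using raw_shape[OF e(3)] by blast
  have "r1 = r2" using assms(3) e 1(3) 2(3) by (auto simp: hom_simps[OF hom_F])
  moreover have "is_enc e1" using 1(3) by (auto simp: is_enc_def)
  ultimately have "e1 = e2" using raw_unique[OF 1(1,2) _ 1(4) 2(1,2)] 2(4) by blast
  then show ?thesis using e by simp
qed

lemma EE_df: "E \<in> EE \<Longrightarrow> df E"
proof -
  assume "E \<in> EE"
  then obtain e U where "E = F e" "U \<in> ran \<sigma>" "e \<in> subterms U" by (auto simp: EE_def EEraw_def)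
  then show "df E" using df_F df_ran by (auto simp: df_def intro: subterms_trans)
qed

lemma S3: "(\<forall>y\<in>vars t. exposed A (F (Vr y)) \<longrightarrow> (\<exists>z\<in>dom \<sigma>. exposed A (the (\<sigma> z)))) \<Longrightarrow>
   exposed A (F t) \<Longrightarrow> exposed A t \<or> (\<exists>z\<in>dom \<sigma>. exposed A (the (\<sigma> z)))"
proof (induction t rule: msg_induct)
  case (step t)
  show ?case
  proof (cases "leaf t")
    case True then show ?thesis using step.prems by (auto elim!: leaf_cases)
  next
    case False
    note h = homD[OF hom_F False]
    have nl: "\<not> leaf (F t)" using h False leaf_head by metis
    show ?thesis
    proof (cases "is_enc t")
      case True
      then have "is_enc (F t)" using h by (simp add: is_enc_def)
      then show ?thesis using step.prems exposed_enc by blast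
    next
      case ne: False
      then have "\<not> is_enc (F t)" using h by (simp add: is_enc_def)
      then obtain a where a: "a \<in> set (args t)" "exposed A (F a)"
        using step.prems(2) exposed_nonleaf[OF nl] h by auto
      have "vars a \<subseteq> vars t" using a(1) False by (auto simp: vars_nonleaf)
      then have "exposed A a \<or> (\<exists>z\<in>dom \<sigma>. exposed A (the (\<sigma> z)))"
        using step.IH[OF a(1)] step.prems(1) a(2) by blast
      then show ?thesis using exposed_nonleaf[OF False ne] a(1) by blast
    qed
  qed
qed

lemma V3: "exposed A (F (Vr x)) \<Longrightarrow> \<exists>z\<in>dom \<sigma>. exposed A (the (\<sigma> z))"
proof (induction x rule: wf_induct_rule[OF wf_Rel])
  case (1 x)
  show ?case
  proof (cases "x \<in> dom \<sigma>")
    case False then show ?thesis using 1 F_Vr_None by simp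
  next
    case True
    have "exposed A (F (the (\<sigma> x)))" using 1(2) F_Vr[OF True] by simp
    moreover have "\<forall>y\<in>vars (the (\<sigma> x)). exposed A (F (Vr y)) \<longrightarrow> (\<exists>z\<in>dom \<sigma>. exposed A (the (\<sigma> z)))"
      using 1(1) True by (auto simp: Rel_def)
    ultimately show ?thesis using S3 True by blast
  qed
qed

lemma D3: "exposed A (F t) \<Longrightarrow> exposed A t \<or> (\<exists>z\<in>dom \<sigma>. exposed A (the (\<sigma> z)))"
  using S3 V3 by blast

lemma subterms_leaf: "leaf t \<Longrightarrow> subterms t = {t}"
  by (subst subterms_rec) (auto simp: leaf_args)

lemma S2: "(\<forall>y\<in>vars t. \<forall>u. u \<in> subterms (F (Vr y)) \<and> is_enc u \<longrightarrow> u \<in> EE) \<Longrightarrow>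
   u \<in> subterms (F t) \<Longrightarrow> is_enc u \<Longrightarrow> u \<in> F ` {e\<in>subterms t. is_enc e} \<or> u \<in> EE"
proof (induction t rule: msg_induct)
  case (step t)
  show ?case
  proof (cases "leaf t")
    case True
    then show ?thesis using step.prems
      by (auto elim!: leaf_cases simp: subterms_leaf is_enc_def)
  next
    case False
    note h = homD[OF hom_F False]
    have "u = F t \<or> (\<exists>a\<in>set (args t). u \<in> subterms (F a))"
      using step.prems(2) h by (subst (asm) subterms_rec) auto
    then show ?thesis
    proof
      assume "u = F t"
      then have "is_enc t" using step.prems(3) h by (simp add: is_enc_def)
      then show ?thesis using \<open>u = F t\<close> by auto
    next
      assume "\<exists>a\<in>set (args t). u \<in> subterms (F a)"
      then obtain a where a: "a \<in> set (args t)" "u \<in> subterms (F a)" by blast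
      have "vars a \<subseteq> vars t" using a(1) False by (auto simp: vars_nonleaf)
      then have "u \<in> F ` {e\<in>subterms a. is_enc e} \<or> u \<in> EE"
        using step.IH[OF a(1)] step.prems(1,3) a(2) by blast
      then show ?thesis using arg_subterm[OF a(1)] by blast
    qed
  qed
qed

lemma V2: "u \<in> subterms (F (Vr x)) \<Longrightarrow> is_enc u \<Longrightarrow> u \<in> EE"
proof (induction x arbitrary: u rule: wf_induct_rule[OF wf_Rel])
  case (1 x)
  show ?case
  proof (cases "x \<in> dom \<sigma>")
    case False then show ?thesis using 1 F_Vr_None by (simp add: subterms_leaf is_enc_def)
  next
    case True
    have u: "u \<in> subterms (F (the (\<sigma> x)))" using 1(2) F_Vr[OF True] by simp
    have "\<forall>y\<in>vars (the (\<sigma> x)). \<forall>u. u \<in> subterms (F (Vr y)) \<and> is_enc u \<longrightarrow> u \<in> EE"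
      using 1(1) True by (auto simp: Rel_def)
    then have "u \<in> F ` {e\<in>subterms (the (\<sigma> x)). is_enc e} \<or> u \<in> EE"
      using S2 u 1(3) by blast
    then show ?thesis using dom_ran[OF True] by (auto simp: EE_def EEraw_def)
  qed
qed

lemma D2: "u \<in> subterms (F t) \<Longrightarrow> is_enc u \<Longrightarrow> u \<in> F ` {e\<in>subterms t. is_enc e} \<or> u \<in> EE"
  using S2 V2 by blast

lemma nd_self: "(\<forall>v\<in>subterms u. key_ok s v \<and> \<not> is_destr v) \<Longrightarrow> \<not> is_destr u"
  by simp

lemma X: "(\<forall>v\<in>subterms u. key_ok s v \<and> \<not> is_destr v) \<Longrightarrow> exposed {s} u \<Longrightarrow> deduc \<phi> (F u) \<Longrightarrow> deduc \<phi> (Nm s)"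
proof (induction u)
  case (Pair a b)
  have sa: "\<forall>v\<in>subterms a. key_ok s v \<and> \<not> is_destr v" "\<forall>v\<in>subterms b. key_ok s v \<and> \<not> is_destr v"
    using Pair.prems(1) arg_subterm[of _ "Pair a b"] by auto
  have d: "deduc \<phi> (Pair (F a) (F b))" using Pair.prems(3) by (simp add: hom_simps[OF hom_F])
  have da: "deduc \<phi> (F a)" using d_eq[OF ded_Pi1[OF d] eqE.ax_pi1] .
  have db: "deduc \<phi> (F b)" using d_eq[OF ded_Pi2[OF d] eqE.ax_pi2] .
  show ?case using Pair.prems(2) Pair.IH sa da db by auto
next
  case (Sign a b)
  have sa: "\<forall>v\<in>subterms a. key_ok s v \<and> \<not> is_destr v"
    using Sign.prems(1) arg_subterm[of _ "Sign a b"] by auto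
  have ko: "key_ok s (Sign a b)" using Sign.prems(1) by auto
  then have "\<not> exposed {s} b" using exposed_fn[of "{s}" b] by (auto simp: key_ok_def)
  then have ea: "exposed {s} a" using Sign.prems(2) by simp
  have d: "deduc \<phi> (Sign (F a) (F b))" using Sign.prems(3) by (simp add: hom_simps[OF hom_F])
  have da: "deduc \<phi> (F a)" using d_eq[OF ded_Ret[OF d] eqE.ax_retrieve] .
  show ?case using Sign.IH sa da ea by auto
next
  case (Pub a)
  have "key_ok s (Pub a)" using Pub.prems(1) by auto
  then show ?case using exposed_fn[of "{s}" a] Pub.prems(2) by (auto simp: key_ok_def)
next
  case (Priv a)
  have "key_ok s (Priv a)" using Priv.prems(1) by auto
  then show ?case using exposed_fn[of "{s}" a] Priv.prems(2) by (auto simp: key_ok_def)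
next
  case (Nm n) then show ?case by simp
qed (drule nd_self, simp add: is_destr_def)+

lemma R1: assumes "U \<in> ran \<sigma>" "subt U p = Some u" "exposed Rand u" shows "\<exists>q. p = q @ [3]"
proof -
  obtain w n where w: "subt u w = Some (Nm n)" "n \<in> Rand"
     "\<forall>w1 w2 v. w = w1 @ w2 \<and> w2 \<noteq> [] \<and> subt u w1 = Some v \<longrightarrow> \<not> is_enc v"
    using exposed_pos[OF assms(3)] by blast
  obtain U' q0 u0 where U': "U' \<in> ran \<sigma>" "subt U' q0 = Some u0" "is_enc u0" "subt U' (q0 @ [3]) = Some (Nm n)"
    using w(2) by (auto simp: Rand_def)
  have pe: "prob_enc (ran \<sigma>) U' q0" using W1 U'(1-3) by blast
  have sw: "subt U (p @ w) = Some (Nm n)" using assms(2) w(1) by (simp add: subt_append)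
  obtain q' where q': "p @ w = q' @ [3]" "subt U q' = Some u0"
    using pe assms(1) sw U'(2,4) unfolding prob_enc_def by fastforce
  show ?thesis
  proof (cases "w = []")
    case True then show ?thesis using q' by auto
  next
    case False
    then obtain w' where w': "w = w' @ [3]" "q' = p @ w'" using list_snoc3[OF q'(1)] by blast
    then have "subt u w' = Some u0" using q'(2) assms(2) by (simp add: subt_append)
    then show ?thesis using w(3) w'(1) U'(3) by blast
  qed
qed

definition Renc where "Renc t \<longleftrightarrow> (\<exists>a b r. r \<in> Rand \<and> (t = Enc a b (Nm r) \<or> t = Enca a b (Nm r)))"

inductive good where
  gE: "t \<in> EE \<Longrightarrow> good t"
| gS: "t \<notin> Nm ` insert s Rand \<Longrightarrow> \<not> Renc t \<Longrightarrow> (\<forall>a. a \<in> set (args t) \<longrightarrow> good a) \<Longrightarrow> good t"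

lemma good_nNm: "good t \<Longrightarrow> t \<notin> Nm ` insert s Rand"
  by (induction rule: good.induct) (auto dest: EE_enc simp: is_enc_def)

lemma good_ns: "good t \<Longrightarrow> t \<noteq> Nm s" using good_nNm by blast

lemma good_step: "good t \<Longrightarrow> t \<notin> EE \<Longrightarrow> t \<notin> Nm ` insert s Rand \<and> \<not> Renc t \<and> (\<forall>a\<in>set (args t). good a)"
  by (cases rule: good.cases) auto

lemma good_nonenc: "good t \<Longrightarrow> \<not> is_enc t \<Longrightarrow> a \<in> set (args t) \<Longrightarrow> good a"
  using good_step EE_enc by blast

lemma gS_nonenc: "\<not> leaf t \<Longrightarrow> \<not> is_enc t \<Longrightarrow> (\<forall>a\<in>set (args t). good a) \<Longrightarrow> good t"
  by (rule gS) (auto simp: Renc_def is_enc_def leaf_def)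

lemma G1: "(\<forall>u\<in>subterms t. is_enc u \<longrightarrow> u \<in> EE) \<Longrightarrow> \<not> exposed (insert s Rand) t \<Longrightarrow> good t"
proof (induction t rule: msg_induct)
  case (step t)
  show ?case
  proof (cases "is_enc t")
    case True then show ?thesis using step.prems(1) by (auto intro: gE)
  next
    case ne: False
    show ?thesis
    proof (rule gS)
      show "t \<notin> Nm ` insert s Rand" using step.prems(2) by auto
      show "\<not> Renc t" using ne by (auto simp: Renc_def is_enc_def)
      show "\<forall>a. a \<in> set (args t) \<longrightarrow> good a"
      proof (intro allI impI)
        fix a assume a: "a \<in> set (args t)"
        then have nl: "\<not> leaf t" using leaf_args by fastforce
        have "\<not> exposed (insert s Rand) a" using step.prems(2) exposed_nonleaf[OF nl ne] a by blast
        moreover have "\<forall>u\<in>subterms a. is_enc u \<longrightarrow> u \<in> EE" using step.prems(1) arg_subterm[OF a] by blast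
        ultimately show "good a" using step.IH[OF a] by blast
      qed
    qed
  qed
qed

lemma L_E: assumes "E \<in> EE" "good y" "y \<notin> EE" shows "repl s M y \<noteq> repl s M E"
proof
  assume eq: "repl s M y = repl s M E"
  obtain a b r where r: "r \<in> Rand" "E = Enc a b (Nm r) \<or> E = Enca a b (Nm r)" using EE_third[OF assms(1)] by blast
  have rs: "r \<noteq> s" using r(1) s_Rand by blast
  have yns: "y \<noteq> Nm s" using good_ns[OF assms(2)] .
  have gy: "\<forall>a\<in>set (args y). good a" "\<not> Renc y" using good_step[OF assms(2,3)] by auto
  from r(2) show False
  proof
    assume "E = Enc a b (Nm r)"
    then have "repl s M y = Enc (repl s M a) (repl s M b) (Nm r)" using eq rs by (simp add: hom_simps[OF hom_repl])
    then obtain y1 y2 y3 where y: "y = Enc y1 y2 y3" "repl s M y3 = Nm r" using repl_eq_Enc[OF yns] by blast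
    moreover have "good y3" using gy(1) y(1) by simp
    ultimately have "y3 = Nm r" using repl_eq_Nm[OF good_ns] by blast
    then show False using gy(2) y r(1) by (auto simp: Renc_def)
  next
    assume "E = Enca a b (Nm r)"
    then have "repl s M y = Enca (repl s M a) (repl s M b) (Nm r)" using eq rs by (simp add: hom_simps[OF hom_repl])
    then obtain y1 y2 y3 where y: "y = Enca y1 y2 y3" "repl s M y3 = Nm r" using repl_eq_Enca[OF yns] by blast
    moreover have "good y3" using gy(1) y(1) by simp
    ultimately have "y3 = Nm r" using repl_eq_Nm[OF good_ns] by blast
    then show False using gy(2) y r(1) by (auto simp: Renc_def)
  qed
qed

lemma inj: "good x \<Longrightarrow> good y \<Longrightarrow> repl s M x = repl s M y \<Longrightarrow> x = y"
proof (induction x arbitrary: y rule: msg_induct)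
  case (step x)
  show ?case
  proof (cases "x \<in> EE")
    case xE: True
    show ?thesis
    proof (cases "y \<in> EE")
      case yE: True
      obtain a b r where r: "r \<in> Rand" "x = Enc a b (Nm r) \<or> x = Enca a b (Nm r)" using EE_third[OF xE] by blast
      obtain a' b' r' where r': "r' \<in> Rand" "y = Enc a' b' (Nm r') \<or> y = Enca a' b' (Nm r')" using EE_third[OF yE] by blast
      have "r \<noteq> s" "r' \<noteq> s" using r(1) r'(1) s_Rand by blast+
      then have "r = r'" using step.prems(3) r(2) r'(2) by (auto simp: hom_simps[OF hom_repl])
      then have "args x ! 2 = args y ! 2" using r(2) r'(2) by auto
      then show ?thesis using EE_unique xE yE by blast
    next
      case False
      then show ?thesis using L_E[OF xE step.prems(2) False, where M=M] step.prems(3) by simp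
    qed
  next
    case xnE: False
    show ?thesis
    proof (cases "y \<in> EE")
      case yE: True
      then show ?thesis using L_E[OF yE step.prems(1) xnE, where M=M] step.prems(3) by simp
    next
      case ynE: False
      have gx: "\<forall>a\<in>set (args x). good a" using good_step[OF step.prems(1) xnE] by blast
      have gy: "\<forall>a\<in>set (args y). good a" using good_step[OF step.prems(2) ynE] by blast
      have hx: "head (repl s M x) = head x \<and> args (repl s M x) = map (repl s M) (args x)"
        using repl_nonNm good_ns[OF step.prems(1)] by blast
      have hy: "head (repl s M y) = head y \<and> args (repl s M y) = map (repl s M) (args y)"
        using repl_nonNm good_ns[OF step.prems(2)] by blast
      have hd: "head x = head y" using hx hy step.prems(3) by simp
      have m: "map (repl s M) (args x) = map (repl s M) (args y)" using hx hy step.prems(3) by simp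
      then have len: "length (args x) = length (args y)" by (metis length_map)
      have "args x = args y"
      proof (rule nth_equalityI[OF len])
        fix i assume i: "i < length (args x)"
        have "repl s M (args x ! i) = repl s M (args y ! i)" using m i len by (metis nth_map)
        moreover have "args x ! i \<in> set (args x)" "args y ! i \<in> set (args y)" using i len by auto
        ultimately show "args x ! i = args y ! i" using step.IH gx gy by blast
      qed
      then show ?thesis using hd head_args_eq by blast
    qed
  qed
qed

end

locale WF2 = WF +
  assumes nd: "\<not> deduc \<phi> (Nm s)"
begin

lemma noexp_var: "z \<in> dom \<sigma> \<Longrightarrow> \<not> exposed (insert s Rand) (the (\<sigma> z))"
proof
  assume z: "z \<in> dom \<sigma>" and e: "exposed (insert s Rand) (the (\<sigma> z))"
  have U: "the (\<sigma> z) \<in> ran \<sigma>" using dom_ran[OF z] .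
  have "exposed {s} (the (\<sigma> z)) \<or> exposed Rand (the (\<sigma> z))" using e exposed_Un[of "{s}" Rand] by simp
  then show False
  proof
    assume "exposed {s} (the (\<sigma> z))"
    moreover have "deduc \<phi> (F (the (\<sigma> z)))" using d_frame[of z \<phi>] z F_Vr[OF z] by simp
    ultimately show False using X sub_props[OF U self_subterm] nd by blast
  next
    assume "exposed Rand (the (\<sigma> z))"
    then show False using R1[OF U, of "[]"] by simp
  qed
qed

lemma goodF: assumes "U \<in> ran \<sigma>" "subt U p = Some u" "\<forall>q. p \<noteq> q @ [3]" "\<not> exposed {s} u"
  shows "good (F u)"
proof (rule G1)
  have uU: "u \<in> subterms U" using assms(2) by (auto simp: subterms_def)
  show "\<forall>v\<in>subterms (F u). is_enc v \<longrightarrow> v \<in> EE"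
  proof (intro ballI impI)
    fix v assume "v \<in> subterms (F u)" "is_enc v"
    then have "v \<in> F ` {e\<in>subterms u. is_enc e} \<or> v \<in> EE" using D2 by blast
    then show "v \<in> EE"
    proof
      assume "v \<in> F ` {e\<in>subterms u. is_enc e}"
      then obtain x where x: "v = F x" "x \<in> subterms u" "is_enc x" by blast
      then have "x \<in> EEraw" using uU assms(1) subterms_trans unfolding EEraw_def by blast
      then show ?thesis using x(1) unfolding EE_def by blast
    qed
  qed
  show "\<not> exposed (insert s Rand) (F u)"
  proof
    assume "exposed (insert s Rand) (F u)"
    then have "exposed (insert s Rand) u \<or> (\<exists>z\<in>dom \<sigma>. exposed (insert s Rand) (the (\<sigma> z)))" using D3 by blast
    then show False
    proof
      assume "exposed (insert s Rand) u"
      then have "exposed {s} u \<or> exposed Rand u" using exposed_Un[of "{s}" Rand] by simp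
      then show False using assms R1 by blast
    qed (use noexp_var in blast)
  qed
qed

lemma good_FVr: "x \<in> dom \<sigma> \<Longrightarrow> good (F (Vr x))"
  using goodF[OF dom_ran, of x "[]"] noexp_var[of x] exposed_Un[of "{s}" Rand] F_Vr by simp

lemma EE_parts: assumes "E \<in> EE"
  shows "\<exists>U q m k r. U \<in> ran \<sigma> \<and> subt U (q @ [1]) = Some m \<and> subt U (q @ [2]) = Some k \<and> s \<notin> fn k
     \<and> (E = Enc (F m) (F k) (Nm r) \<or> E = Enca (F m) (F k) (Nm r)) \<and> m \<in> subterms U"
proof -
  obtain U q m k r where h: "U \<in> ran \<sigma>" "subt U q = Some (Enc m k (Nm r)) \<and> E = Enc (F m) (F k) (Nm r)
      \<or> subt U q = Some (Enca m k (Nm r)) \<and> E = Enca (F m) (F k) (Nm r)"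
    using EE_shape[OF assms] by blast
  from h(2) show ?thesis
  proof
    assume a: "subt U q = Some (Enc m k (Nm r)) \<and> E = Enc (F m) (F k) (Nm r)"
    then have "Enc m k (Nm r) \<in> subterms U" by (auto simp: subterms_def)
    then have "key_ok s (Enc m k (Nm r))" using W2[OF h(1)] by blast
    then have "s \<notin> fn k" by (simp add: key_ok_def)
    moreover have "subt U (q @ [1]) = Some m" "subt U (q @ [2]) = Some k" using a by (auto simp: subt_append)
    ultimately show ?thesis using a h(1)
      by (intro exI[of _ U] exI[of _ q] exI[of _ m] exI[of _ k] exI[of _ r]) (auto simp: subterms_def)
  next
    assume a: "subt U q = Some (Enca m k (Nm r)) \<and> E = Enca (F m) (F k) (Nm r)"
    then have "Enca m k (Nm r) \<in> subterms U" by (auto simp: subterms_def)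
    then have "key_ok s (Enca m k (Nm r))" using W2[OF h(1)] by blast
    then have "s \<notin> fn k" by (simp add: key_ok_def)
    moreover have "subt U (q @ [1]) = Some m" "subt U (q @ [2]) = Some k" using a by (auto simp: subt_append)
    ultimately show ?thesis using a h(1)
      by (intro exI[of _ U] exI[of _ q] exI[of _ m] exI[of _ k] exI[of _ r]) (auto simp: subterms_def)
  qed
qed

lemma key_good: "E \<in> EE \<Longrightarrow> E = Enc a b c \<or> E = Enca a b c \<Longrightarrow> good b"
proof -
  assume E: "E \<in> EE" "E = Enc a b c \<or> E = Enca a b c"
  obtain U q m k r where h: "U \<in> ran \<sigma>" "subt U (q @ [2]) = Some k" "s \<notin> fn k"
     "E = Enc (F m) (F k) (Nm r) \<or> E = Enca (F m) (F k) (Nm r)"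
    using EE_parts[OF E(1)] by blast
  have b: "b = F k" using h(4) E(2) by auto
  have ne: "\<not> exposed {s} k" using exposed_fn[of "{s}" k] h(3) by auto
  show "good b" unfolding b by (rule goodF[OF h(1,2) _ ne]) auto
qed

lemma plain_good: "E \<in> EE \<Longrightarrow> E = Enc a b c \<or> E = Enca a b c \<Longrightarrow> deduc \<phi> a \<Longrightarrow> good a"
proof -
  assume E: "E \<in> EE" "E = Enc a b c \<or> E = Enca a b c" and d: "deduc \<phi> a"
  obtain U q m k r where h: "U \<in> ran \<sigma>" "subt U (q @ [1]) = Some m"
     "E = Enc (F m) (F k) (Nm r) \<or> E = Enca (F m) (F k) (Nm r)" "m \<in> subterms U"
    using EE_parts[OF E(1)] by blast
  have a: "a = F m" using h(3) E(2) by auto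
  have ne: "\<not> exposed {s} m" using X[OF sub_props[OF h(1,4)]] d a nd by blast
  show "good a" unfolding a by (rule goodF[OF h(1,2) _ ne]) auto
qed

lemma NF: "good N \<Longrightarrow> nf N \<Longrightarrow> nf M \<Longrightarrow> nf (repl s M N)"
proof (induction N rule: msg_induct)
  case (step N)
  show ?case
  proof (cases "N \<in> EE")
    case True then show ?thesis using df_repl EE_df step.prems(3) by blast
  next
    case nE: False
    then have st: "N \<notin> Nm ` insert s Rand" "\<not> Renc N" "\<forall>a\<in>set (args N). good a"
      using good_step step.prems(1) by auto
    have IH: "\<And>a. a \<in> set (args N) \<Longrightarrow> nf a \<Longrightarrow> nf (repl s M a)"
      using step.IH st(3) step.prems(3) by blast
    note hs = hom_simps[OF hom_repl]
    show ?thesis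
    proof (cases N)
      case (Nm n) then show ?thesis using st(1) by auto
    next
      case (Vr x) then show ?thesis by simp
    next
      case (Cst c) then show ?thesis by (simp add: hs)
    next
      case (Enc a b c) then show ?thesis using IH step.prems(2) by (simp add: hs)
    next
      case (Enca a b c) then show ?thesis using IH step.prems(2) by (simp add: hs)
    next
      case (Pub a) then show ?thesis using IH step.prems(2) by (simp add: hs)
    next
      case (Priv a) then show ?thesis using IH step.prems(2) by (simp add: hs)
    next
      case (Pair a b) then show ?thesis using IH step.prems(2) by (simp add: hs)
    next
      case (Sign a b) then show ?thesis using IH step.prems(2) by (simp add: hs)
    next
      case (Pi1 a)
      have n: "nf a" "\<forall>x y. a \<noteq> Pair x y" using nf_Pi1 step.prems(2) Pi1 by auto
      have ga: "good a" using st(3) Pi1 by simp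
      have "\<forall>x y. repl s M a \<noteq> Pair x y" using repl_eq_Pair[OF good_ns[OF ga]] n(2) by blast
      then show ?thesis using IH[of a] n Pi1 by (simp add: hs rPi1_nr)
    next
      case (Pi2 a)
      have n: "nf a" "\<forall>x y. a \<noteq> Pair x y" using nf_Pi2 step.prems(2) Pi2 by auto
      have ga: "good a" using st(3) Pi2 by simp
      have "\<forall>x y. repl s M a \<noteq> Pair x y" using repl_eq_Pair[OF good_ns[OF ga]] n(2) by blast
      then show ?thesis using IH[of a] n Pi2 by (simp add: hs rPi2_nr)
    next
      case (Retrieve a)
      have n: "nf a" "\<forall>x y. a \<noteq> Sign x y" using nf_Ret step.prems(2) Retrieve by auto
      have ga: "good a" using st(3) Retrieve by simp
      have "\<forall>x y. repl s M a \<noteq> Sign x y" using repl_eq_Sign[OF good_ns[OF ga]] n(2) by blast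
      then show ?thesis using IH[of a] n Retrieve by (simp add: hs rRet_nr)
    next
      case (Dec a k)
      have n: "nf a" "nf k" "\<forall>x c. a \<noteq> Enc x k c" using nf_Dec step.prems(2) Dec by auto
      have ga: "good a" "good k" using st(3) Dec by auto
      have "\<forall>x c. repl s M a \<noteq> Enc x (repl s M k) c"
      proof (intro allI notI)
        fix x c assume "repl s M a = Enc x (repl s M k) c"
        then obtain a1 a2 a3 where a: "a = Enc a1 a2 a3" "repl s M a2 = repl s M k"
          using repl_eq_Enc[OF good_ns[OF ga(1)]] by blast
        have "good a2"
        proof (cases "a \<in> EE")
          case True then show ?thesis using key_good a(1) by blast
        next
          case False then show ?thesis using good_step ga(1) a(1) by auto
        qed
        then have "a2 = k" using inj ga(2) a(2) by blast
        then show False using n(3) a(1) by blast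
      qed
      then show ?thesis using IH[of a] IH[of k] n Dec by (simp add: hs rDec_nr)
    next
      case (Deca a k)
      have n: "nf a" "nf k" "\<forall>x w c. \<not> (a = Enca x (Pub w) c \<and> k = Priv w)" using nf_Deca step.prems(2) Deca by auto
      have ga: "good a" "good k" using st(3) Deca by auto
      have "\<forall>x w c. \<not> (repl s M a = Enca x (Pub w) c \<and> repl s M k = Priv w)"
      proof (intro allI notI)
        fix x w c assume h: "repl s M a = Enca x (Pub w) c \<and> repl s M k = Priv w"
        then obtain a1 a2 a3 where a: "a = Enca a1 a2 a3" "repl s M a2 = Pub w"
          using repl_eq_Enca[OF good_ns[OF ga(1)]] by blast
        have ga2: "good a2"
        proof (cases "a \<in> EE")
          case True then show ?thesis using key_good a(1) by blast
        next
          case False then show ?thesis using good_step ga(1) a(1) by auto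
        qed
        then obtain b where b: "a2 = Pub b" "repl s M b = w" using repl_eq_Pub[OF good_ns[OF ga2]] a(2) by blast
        have "good b" using good_nonenc[OF ga2] b(1) by (simp add: is_enc_def)
        then have "good (Priv b)" by (intro gS_nonenc) (auto simp: is_enc_def)
        moreover have "repl s M (Priv b) = repl s M k" using h b(2) by (simp add: hs)
        ultimately have "Priv b = k" using inj ga(2) by blast
        then show False using n(3) a(1) b(1) by blast
      qed
      then show ?thesis using IH[of a] IH[of k] n Deca by (simp add: hs rDeca_nr)
    next
      case (Check a b c)
      have n: "nf a" "nf b" "nf c" "\<not> (\<exists>w. b = Sign a (Priv w) \<and> c = Pub w)"
        using nf_Check step.prems(2) Check by auto
      have g: "good a" "good b" "good c" using st(3) Check by auto
      have "\<not> (\<exists>w. repl s M b = Sign (repl s M a) (Priv w) \<and> repl s M c = Pub w)"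
      proof
        assume "\<exists>w. repl s M b = Sign (repl s M a) (Priv w) \<and> repl s M c = Pub w"
        then obtain w where h: "repl s M b = Sign (repl s M a) (Priv w)" "repl s M c = Pub w" by blast
        obtain b1 b2 where b: "b = Sign b1 b2" "repl s M b1 = repl s M a" "repl s M b2 = Priv w"
          using repl_eq_Sign[OF good_ns[OF g(2)] h(1)] by blast
        have gb: "good b1" "good b2" using good_nonenc[OF g(2)] b(1) by (auto simp: is_enc_def)
        obtain w' where w': "b2 = Priv w'" "repl s M w' = w" using repl_eq_Priv[OF good_ns[OF gb(2)] b(3)] by blast
        have gw: "good w'" using good_nonenc[OF gb(2)] w'(1) by (auto simp: is_enc_def)
        obtain c' where c': "c = Pub c'" "repl s M c' = w" using repl_eq_Pub[OF good_ns[OF g(3)] h(2)] by blast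
        have gc: "good c'" using good_nonenc[OF g(3)] c'(1) by (auto simp: is_enc_def)
        have "b1 = a" using inj gb(1) g(1) b(2) by blast
        moreover have "c' = w'" using inj gc gw c'(2) w'(2) by blast
        ultimately show False using n(4) b(1) w'(1) c'(1) by blast
      qed
      then show ?thesis using IH[of a] IH[of b] IH[of c] n Check by (simp add: hs rCheck_nr)
    qed
  qed
qed

end



context WF2
begin

lemma ded_F: "public (fst \<phi>) U \<Longrightarrow> vars U \<subseteq> dom \<sigma> \<Longrightarrow> deduc \<phi> (F U)"
proof (induction U rule: msg_induct)
  case (step U)
  show ?case
  proof (cases "leaf U")
    case True then show ?thesis
    proof (rule leaf_cases)
      fix n assume "U = Nm n" then show ?thesis using step.prems by (auto intro: deduc.d_name)
    next
      fix x assume "U = Vr x" then show ?thesis using step.prems d_frame[of x \<phi>] by auto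
    qed
  next
    case False
    note h = homD[OF hom_F False]
    have pa: "head U \<noteq> SPriv" "\<forall>a\<in>set (args U). public (fst \<phi>) a \<and> vars a \<subseteq> dom \<sigma>"
      using step.prems False by (auto simp: public_nonleaf vars_nonleaf)
    show ?thesis
    proof (rule d_fun)
      show "is_fun (F U)" using h False leaf_head is_fun_leaf by metis
      show "head (F U) \<noteq> SPriv" using h pa by simp
      show "\<forall>a\<in>set (args (F U)). deduc \<phi> a" using h pa step.IH by auto
    qed
  qed
qed

lemma ded_norm: "public (fst \<phi>) U \<Longrightarrow> vars U \<subseteq> dom \<sigma> \<Longrightarrow> deduc \<phi> (norm (F U))"
  using d_eq[OF ded_F eqE_norm_sound] by blast

lemma good_Nm: "n \<notin> fst \<phi> \<Longrightarrow> good (Nm n)"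
  by (rule gS) (use sN Rand_sub in \<open>auto simp: Renc_def\<close>)

lemma GA: "public (fst \<phi>) U \<Longrightarrow> vars U \<subseteq> dom \<sigma> \<Longrightarrow> good (norm (F U))"
proof (induction U rule: msg_induct)
  case (step U)
  show ?case
  proof (cases "leaf U")
    case True then show ?thesis
    proof (rule leaf_cases)
      fix n assume "U = Nm n" then show ?thesis using step.prems good_Nm by auto
    next
      fix x assume U: "U = Vr x"
      then have x: "x \<in> dom \<sigma>" using step.prems by auto
      have "df (F (Vr x))" using F_Vr[OF x] df_F df_ran dom_ran[OF x] by simp
      then have "norm (F (Vr x)) = F (Vr x)" by (rule df_nf)
      then show ?thesis using good_FVr[OF x] U by simp
    qed
  next
    case False
    have pa: "head U \<noteq> SPriv" "\<forall>a\<in>set (args U). public (fst \<phi>) a \<and> vars a \<subseteq> dom \<sigma>"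
      using step.prems False by (auto simp: public_nonleaf vars_nonleaf)
    have IH: "\<And>a. a \<in> set (args U) \<Longrightarrow> good (norm (F a)) \<and> deduc \<phi> (norm (F a))"
      using step.IH pa(2) ded_norm by blast
    note hF = hom_simps[OF hom_F]
    show ?thesis
    proof (cases U)
      case (Nm n) then show ?thesis using False by simp
    next
      case (Vr x) then show ?thesis using False by simp
    next
      case (Cst c) then show ?thesis by (simp add: hF) (rule gS_nonenc, auto simp: is_enc_def)
    next
      case (Enc a b c)
      have g: "good (norm (F a))" "good (norm (F b))" "good (norm (F c))" using IH Enc by auto
      show ?thesis unfolding Enc
      proof (simp add: hF, rule gS)
        show "\<not> Renc (Enc (norm (F a)) (norm (F b)) (norm (F c)))"
          using good_nNm[OF g(3)] by (auto simp: Renc_def)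
      qed (use g in auto)
    next
      case (Enca a b c)
      have g: "good (norm (F a))" "good (norm (F b))" "good (norm (F c))" using IH Enca by auto
      show ?thesis unfolding Enca
      proof (simp add: hF, rule gS)
        show "\<not> Renc (Enca (norm (F a)) (norm (F b)) (norm (F c)))"
          using good_nNm[OF g(3)] by (auto simp: Renc_def)
      qed (use g in auto)
    next
      case (Pub a) then show ?thesis using IH by (simp add: hF) (rule gS_nonenc, auto simp: is_enc_def)
    next
      case (Priv a) then show ?thesis using pa by simp
    next
      case (Pair a b) then show ?thesis using IH by (simp add: hF) (rule gS_nonenc, auto simp: is_enc_def)
    next
      case (Sign a b) then show ?thesis using IH by (simp add: hF) (rule gS_nonenc, auto simp: is_enc_def)
    next
      case (Pi1 a)
      have g: "good (norm (F a))" using IH Pi1 by auto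
      show ?thesis
      proof (cases "\<exists>x y. norm (F a) = Pair x y")
        case True
        then obtain x y where xy: "norm (F a) = Pair x y" by blast
        then have "good x" using good_nonenc[OF g] by (simp add: is_enc_def)
        then show ?thesis using Pi1 xy by (simp add: hF rPi1_def)
      next
        case False
        then show ?thesis using Pi1 g by (simp add: hF rPi1_nr) (rule gS_nonenc, auto simp: is_enc_def)
      qed
    next
      case (Pi2 a)
      have g: "good (norm (F a))" using IH Pi2 by auto
      show ?thesis
      proof (cases "\<exists>x y. norm (F a) = Pair x y")
        case True
        then obtain x y where xy: "norm (F a) = Pair x y" by blast
        then have "good y" using good_nonenc[OF g] by (simp add: is_enc_def)
        then show ?thesis using Pi2 xy by (simp add: hF rPi2_def)
      next
        case False
        then show ?thesis using Pi2 g by (simp add: hF rPi2_nr) (rule gS_nonenc, auto simp: is_enc_def)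
      qed
    next
      case (Retrieve a)
      have g: "good (norm (F a))" using IH Retrieve by auto
      show ?thesis
      proof (cases "\<exists>x y. norm (F a) = Sign x y")
        case True
        then obtain x y where xy: "norm (F a) = Sign x y" by blast
        then have "good x" using good_nonenc[OF g] by (simp add: is_enc_def)
        then show ?thesis using Retrieve xy by (simp add: hF rRet_def)
      next
        case False
        then show ?thesis using Retrieve g by (simp add: hF rRet_nr) (rule gS_nonenc, auto simp: is_enc_def)
      qed
    next
      case (Dec a k)
      have g: "good (norm (F a))" "good (norm (F k))" "deduc \<phi> (norm (F a))" "deduc \<phi> (norm (F k))"
        using IH Dec by auto
      show ?thesis
      proof (cases "\<exists>x c. norm (F a) = Enc x (norm (F k)) c")
        case True
        then obtain x c where xc: "norm (F a) = Enc x (norm (F k)) c" by blast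
        have "good x"
        proof (cases "norm (F a) \<in> EE")
          case True
          have "deduc \<phi> (Dec (Enc x (norm (F k)) c) (norm (F k)))" using ded_Dec[OF g(3,4)] xc by simp
          then have "deduc \<phi> x" using d_eq eqE.ax_dec by blast
          then show ?thesis using plain_good[OF True] xc by blast
        next
          case False then show ?thesis using good_step[OF g(1)] xc by auto
        qed
        then show ?thesis using Dec xc by (simp add: hF rDec_def)
      next
        case False
        then show ?thesis using Dec g by (simp add: hF rDec_nr) (rule gS_nonenc, auto simp: is_enc_def)
      qed
    next
      case (Deca a k)
      have g: "good (norm (F a))" "good (norm (F k))" "deduc \<phi> (norm (F a))" "deduc \<phi> (norm (F k))"
        using IH Deca by auto
      show ?thesis
      proof (cases "\<exists>x w c. norm (F a) = Enca x (Pub w) c \<and> norm (F k) = Priv w")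
        case True
        then obtain x w c where xc: "norm (F a) = Enca x (Pub w) c" "norm (F k) = Priv w" by blast
        have "good x"
        proof (cases "norm (F a) \<in> EE")
          case True
          have "deduc \<phi> (Deca (Enca x (Pub w) c) (Priv w))" using ded_Deca[OF g(3,4)] xc by simp
          then have "deduc \<phi> x" using d_eq eqE.ax_deca by blast
          then show ?thesis using plain_good[OF True] xc by blast
        next
          case False then show ?thesis using good_step[OF g(1)] xc by auto
        qed
        then show ?thesis using Deca xc by (simp add: hF rDeca_def)
      next
        case False
        then have "rDeca (norm (F a)) (norm (F k)) = Deca (norm (F a)) (norm (F k))"
          by (intro rDeca_nr) blast
        then show ?thesis using Deca g by (simp add: hF) (rule gS_nonenc, auto simp: is_enc_def)
      qed
    next
      case (Check a b c)
      have g: "good (norm (F a))" "good (norm (F b))" "good (norm (F c))" using IH Check by auto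
      have "good (Cst ''ok'')" by (rule gS_nonenc) (auto simp: is_enc_def)
      moreover have "good (Check (norm (F a)) (norm (F b)) (norm (F c)))"
        using g by (rule_tac gS_nonenc) (auto simp: is_enc_def)
      ultimately show ?thesis using Check by (simp add: hF rCheck_def)
    qed
  qed
qed

lemma normrep: "good (norm T) \<Longrightarrow> norm (repl s M T) = repl s (norm M) (norm T)"
proof -
  assume g: "good (norm T)"
  have "eqE (repl s M T) (repl s M (norm T))" by (rule eqE_repl[OF eqE_norm_sound])
  moreover have "eqE (repl s M (norm T)) (repl s (norm M) (norm T))" by (rule eqE_repl_M[OF eqE_norm_sound])
  ultimately have "norm (repl s M T) = norm (repl s (norm M) (norm T))" using eqE_norm eqE.trans by blast
  also have "\<dots> = repl s (norm M) (norm T)" using NF[OF g] by simp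
  finally show ?thesis .
qed

lemma hard_passes:
  assumes "closed M" "public (fst \<phi>) U" "vars U \<subseteq> dom \<sigma>" "public (fst \<phi>) V" "vars V \<subseteq> dom \<sigma>"
  shows "passes (frame_repl \<phi> s M) U V \<longleftrightarrow> eqE (F U) (F V)"
proof -
  have sU: "s \<notin> fn U" "s \<notin> fn V" using assms(2,4) sN by (auto simp: public_def)
  have gU: "good (norm (F U))" "good (norm (F V))" using GA assms(2-5) by auto
  have "passes (frame_repl \<phi> s M) U V \<longleftrightarrow> eqE (repl s M (F U)) (repl s M (F V))"
    unfolding passes_def using fapp_repl[OF assms(1) sU(1)] fapp_repl[OF assms(1) sU(2)] by simp
  also have "\<dots> \<longleftrightarrow> repl s (norm M) (norm (F U)) = repl s (norm M) (norm (F V))"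
    unfolding eqE_iff using normrep[OF gU(1)] normrep[OF gU(2)] by simp
  also have "\<dots> \<longleftrightarrow> norm (F U) = norm (F V)" using inj[OF gU, where M="norm M"] by auto
  also have "\<dots> \<longleftrightarrow> eqE (F U) (F V)" by (simp add: eqE_iff)
  finally show ?thesis .
qed

lemma hard: "closed M \<Longrightarrow> closed M' \<Longrightarrow> stat_eq (frame_repl \<phi> s M) (frame_repl \<phi> s M')"
proof -
  assume c: "closed M" "closed M'"
  have fst: "fst (frame_repl \<phi> s N) = fst \<phi>" for N by (simp add: frame_repl_def)
  have dm: "dom (snd (frame_repl \<phi> s N)) = dom \<sigma>" for N by (auto simp: frame_repl_def dom_def)
  show ?thesis unfolding stat_eq_def fst dm using hard_passes[OF c(1)] hard_passes[OF c(2)] by blast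
qed

end



theorem theorem2p6:
  fixes \<phi> :: frame and s :: nat
  assumes "is_frame \<phi>"
    and "s \<in> fst \<phi>"
    and "well_formed \<phi> s"
  shows "\<not> deduc \<phi> (Nm s) \<longleftrightarrow>
    (\<forall>M M'. closed M \<and> closed M' \<and> public (fst \<phi>) M \<and> public (fst \<phi>) M'
       \<longrightarrow> stat_eq (frame_repl \<phi> s M) (frame_repl \<phi> s M'))"
proof
  assume nd: "\<not> deduc \<phi> (Nm s)"
  interpret W: WF2 \<phi> s using assms nd by unfold_locales auto
  show "\<forall>M M'. closed M \<and> closed M' \<and> public (fst \<phi>) M \<and> public (fst \<phi>) M'
       \<longrightarrow> stat_eq (frame_repl \<phi> s M) (frame_repl \<phi> s M')"
    using W.hard by blast
next
  assume H: "\<forall>M M'. closed M \<and> closed M' \<and> public (fst \<phi>) M \<and> public (fst \<phi>) M'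
       \<longrightarrow> stat_eq (frame_repl \<phi> s M) (frame_repl \<phi> s M')"
  show "\<not> deduc \<phi> (Nm s)"
  proof
    assume d: "deduc \<phi> (Nm s)"
    have c: "closed (Cst c)" "public (fst \<phi>) (Cst c)" for c
      by (simp_all add: closed_def vars_nonleaf public_nonleaf)
    show False using easy_dir[OF assms(2) d] H c by blast
  qed
qed

end
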